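(* Let $\Lambda$ be a finite or countable alphabet, $\mu$ a shift-invariant probability measure on $\Lambda^{\mathbb N}$, and $S\subset\mathbb N$ a set of positive lower density. If $\mu$ is disjoint from every measure derived from $S$, then $S$ preserves simple $\mu$-normality: for every $\mu$-normal $x\in\Lambda^{\mathbb N}$ and every $a\in\Lambda$, the symbol $a$ occurs in $x|_S$ with limiting frequency $\mu([a])$.
   Context: $x$ is $\mu$-normal if every finite block $B$ occurs in $x$ with limiting frequency $\mu([B])$. For $S=\{s_1<s_2<\dots\}$, $x|_S=(x_{s_1},x_{s_2},\dots)$. With $y=\mathbbm1_S$, a measure derived from $S$ is a weak-* accumulation point of $\frac1n\sum_{i<n}\delta_{\sigma^iy}$ on $\{0,1\}^{\mathbb N}$ ($\sigma$ the shift). Two invariant measures $\mu,\nu$ are disjoint if the only $\sigma\times\sigma$-invariant measure on the product space with marginals $\mu$ and $\nu$ is $\mu\times\nu$. Lower density $\underline d(S)=\liminf_n\#(S\cap\{1,\dots,n\})/n$. *)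

theory Defs
  imports "HOL-Probability.Probability" "HOL-Library.Infinite_Set"
begin

definition seq_space :: "(nat \<Rightarrow> 'a) measure" where
  "seq_space = PiM UNIV (\<lambda>_. count_space UNIV)"

definition shift :: "(nat \<Rightarrow> 'a) \<Rightarrow> (nat \<Rightarrow> 'a)" where
  "shift x = (\<lambda>n. x (Suc n))"

definition cylinder :: "'a list \<Rightarrow> (nat \<Rightarrow> 'a) set" where
  "cylinder B = {z. \<forall>j<length B. z j = B ! j}"

definition shift_invariant_prob :: "(nat \<Rightarrow> 'a) measure \<Rightarrow> bool" where
  "shift_invariant_prob \<mu> \<longleftrightarrow> prob_space \<mu> \<and> sets \<mu> = sets seq_space \<and>
     distr \<mu> seq_space shift = \<mu>"

definition normal :: "(nat \<Rightarrow> 'a) measure \<Rightarrow> (nat \<Rightarrow> 'a) \<Rightarrow> bool" where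
  "normal \<mu> x \<longleftrightarrow> (\<forall>B::'a list.
     (\<lambda>n. real (card {i. i < n \<and> (\<forall>j<length B. x (i + j) = B ! j)}) / real n)
       \<longlonglongrightarrow> measure \<mu> (cylinder B))"

definition restrict_seq :: "(nat \<Rightarrow> 'a) \<Rightarrow> nat set \<Rightarrow> (nat \<Rightarrow> 'a)" where
  "restrict_seq x S = (\<lambda>k. x (enumerate S k))"

definition lower_density :: "nat set \<Rightarrow> ereal" where
  "lower_density S = liminf (\<lambda>n. ereal (real (card (S \<inter> {..<n})) / real n))"

definition cantor_top :: "(nat \<Rightarrow> bool) topology" where
  "cantor_top = product_topology (\<lambda>_. discrete_topology UNIV) UNIV"

text \<open>\<nu> is a measure derived from S: a weak-* accumulation point of the empirical
  measures (1/n) \<Sum>_{i<n} \<delta>_{\<sigma>^i y}, y = indicator of S.\<close>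
definition derived_measure :: "nat set \<Rightarrow> (nat \<Rightarrow> bool) measure \<Rightarrow> bool" where
  "derived_measure S \<nu> \<longleftrightarrow> prob_space \<nu> \<and> sets \<nu> = sets seq_space \<and>
     (\<exists>r. strict_mono r \<and>
        (\<forall>f. continuous_map cantor_top euclideanreal f \<longrightarrow>
           (\<lambda>k. (\<Sum>i<r k. f ((shift ^^ i) (\<lambda>n. n \<in> S))) / real (r k))
             \<longlonglongrightarrow> (\<integral>z. f z \<partial>\<nu>)))"

definition disjoint_measures :: "(nat \<Rightarrow> 'a) measure \<Rightarrow> (nat \<Rightarrow> 'b) measure \<Rightarrow> bool" where
  "disjoint_measures \<mu> \<nu> \<longleftrightarrow> (\<forall>J. sets J = sets (\<mu> \<Otimes>\<^sub>M \<nu>) \<and>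
      distr J (\<mu> \<Otimes>\<^sub>M \<nu>) (map_prod shift shift) = J \<and>
      distr J \<mu> fst = \<mu> \<and> distr J \<nu> snd = \<nu> \<longrightarrow> J = \<mu> \<Otimes>\<^sub>M \<nu>)"

end

theory Submission
  imports Defs
begin



definition word :: "(nat \<Rightarrow> 'b) \<Rightarrow> nat \<Rightarrow> nat \<Rightarrow> 'b list" where
  "word z i n = map (\<lambda>j. z (i+j)) [0..<n]"
definition cnt :: "(nat \<Rightarrow> 'b) \<Rightarrow> 'b list set \<Rightarrow> nat \<Rightarrow> nat \<Rightarrow> nat" where
  "cnt z W n m = card {i. i < m \<and> word z i n \<in> W}"
definition frq :: "(nat \<Rightarrow> 'b) \<Rightarrow> 'b list set \<Rightarrow> nat \<Rightarrow> nat \<Rightarrow> real" where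
  "frq z W n m = real (cnt z W n m) / real m"

lemma length_word[simp]: "length (word z i n) = n" by (simp add: word_def)
lemma nth_word[simp]: "j < n \<Longrightarrow> word z i n ! j = z (i+j)" by (simp add: word_def)

lemma word_eq_iff: "word z i (length B) = B \<longleftrightarrow> (\<forall>j<length B. z(i+j) = B!j)"
  by (auto simp: list_eq_iff_nth_eq)

lemma word_Suc: "word z i (Suc n) = z i # word z (Suc i) n"
  unfolding word_def by (induct n) auto

lemma word_Suc': "word z i (Suc n) = word z i n @ [z (i+n)]"
  by (simp add: word_def)

lemma cnt_le: "cnt z W n m \<le> m"
proof -
  have "{i. i < m \<and> word z i n \<in> W} \<subseteq> {..<m}" by auto
  from card_mono[OF _ this] show ?thesis by (simp add: cnt_def)
qed

lemma cnt_mono: "W \<subseteq> W' \<Longrightarrow> cnt z W n m \<le> cnt z W' n m"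
  unfolding cnt_def by (rule card_mono) auto

lemma cnt_finite_sum:
  assumes "finite F" shows "cnt z F n m = (\<Sum>w\<in>F. cnt z {w} n m)"
proof -
  have "{i. i < m \<and> word z i n \<in> F} = (\<Union>w\<in>F. {i. i < m \<and> word z i n = w})" by auto
  then have "cnt z F n m = card (\<Union>w\<in>F. {i. i < m \<and> word z i n = w})" by (simp add: cnt_def)
  also have "\<dots> = (\<Sum>w\<in>F. card {i. i < m \<and> word z i n = w})"
    by (rule card_UN_disjoint) (auto simp: assms)
  finally show ?thesis by (simp add: cnt_def)
qed

lemma cnt_compl: "cnt z W n m + cnt z ({w. length w = n} - W) n m = m"
proof -
  have "cnt z W n m + cnt z ({w. length w = n} - W) n m =
    card ({i. i < m \<and> word z i n \<in> W} \<union> {i. i < m \<and> word z i n \<in> {w. length w = n} - W})"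
    unfolding cnt_def by (subst card_Un_disjoint) auto
  also have "{i. i < m \<and> word z i n \<in> W} \<union> {i. i < m \<and> word z i n \<in> {w. length w = n} - W} = {..<m}"
    by auto
  finally show ?thesis by simp
qed

lemma frq_nonneg: "0 \<le> frq z W n m" by (simp add: frq_def)
lemma frq_le1: "frq z W n m \<le> 1"
  using cnt_le[of z W n m] unfolding frq_def by (auto simp: divide_le_eq_1)
lemma frq_mono: "W \<subseteq> W' \<Longrightarrow> frq z W n m \<le> frq z W' n m"
  using cnt_mono[of W W' z n m] by (simp add: frq_def divide_right_mono)
lemma frq_finite_sum: "finite F \<Longrightarrow> frq z F n m = (\<Sum>w\<in>F. frq z {w} n m)"
  unfolding frq_def by (subst cnt_finite_sum) (auto simp: sum_divide_distrib)
lemma frq_compl: "m > 0 \<Longrightarrow> frq z W n m + frq z ({w. length w = n} - W) n m = 1"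
proof -
  have "real (cnt z W n m) + real (cnt z ({w. length w = n} - W) n m) = real m"
    using cnt_compl[of z W n m] by (metis of_nat_add)
  moreover assume "m > 0"
  ultimately show ?thesis by (simp add: frq_def field_simps)
qed

lemma cnt_ext: "cnt z {v @ [a] |a. True} (Suc (length v)) m = cnt z {v} (length v) m"
  unfolding cnt_def word_Suc' by (rule arg_cong[where f=card]) auto

lemma cnt_shift:
  "cnt z {b # w |b. True} (Suc (length w)) m \<le> cnt z {w} (length w) m + 1"
  "cnt z {w} (length w) m \<le> cnt z {b # w |b. True} (Suc (length w)) m + 1"
proof -
  define P where "P i = (word z i (length w) = w)" for i
  have e: "cnt z {b # w |b. True} (Suc (length w)) m = card {i. i < m \<and> P (Suc i)}"
    unfolding cnt_def word_Suc P_def by (rule arg_cong[where f=card]) auto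
  have e2: "cnt z {w} (length w) m = card {i. i < m \<and> P i}"
    unfolding cnt_def P_def by simp
  have i: "card {i. i < m \<and> P (Suc i)} = card {i. 0 < i \<and> i \<le> m \<and> P i}"
  proof -
    have "{i. 0 < i \<and> i \<le> m \<and> P i} = Suc ` {i. i < m \<and> P (Suc i)}"
      by (auto simp: image_iff) (metis Suc_less_eq Suc_pred le_imp_less_Suc)
    then show ?thesis by (simp add: card_image)
  qed
  have f1: "finite {i. 0 < i \<and> i \<le> m \<and> P i}" by (rule finite_subset[of _ "{..m}"]) auto
  have f2: "finite {i. i < m \<and> P i}" by (rule finite_subset[of _ "{..<m}"]) auto
  have "card {i. 0 < i \<and> i \<le> m \<and> P i} \<le> card (insert m {i. i < m \<and> P i})"
    by (rule card_mono) (use f2 in auto)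
  also have "\<dots> \<le> card {i. i < m \<and> P i} + 1" by (simp add: card_insert_if f2)
  finally show "cnt z {b # w |b. True} (Suc (length w)) m \<le> cnt z {w} (length w) m + 1"
    using e e2 i by simp
  have "card {i. i < m \<and> P i} \<le> card (insert 0 {i. 0 < i \<and> i \<le> m \<and> P i})"
    by (rule card_mono) (use f1 in auto)
  also have "\<dots> \<le> card {i. 0 < i \<and> i \<le> m \<and> P i} + 1" by (simp add: card_insert_if f1)
  finally show "cnt z {w} (length w) m \<le> cnt z {b # w |b. True} (Suc (length w)) m + 1"
    using e e2 i by simp
qed



lemma diag_conv:
  fixes g :: "nat \<Rightarrow> nat \<Rightarrow> real"
  assumes b: "\<And>n k. \<bar>g n k\<bar> \<le> 1"
  shows "\<exists>r. strict_mono r \<and> (\<forall>n. convergent (\<lambda>k. g n (r k)))"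
proof -
  interpret subseqs "\<lambda>n s. convergent (\<lambda>k. g n (s k))"
  proof
    fix n and s :: "nat \<Rightarrow> nat" assume "strict_mono s"
    obtain f where f: "strict_mono f" "monoseq (\<lambda>k. g n (s (f k)))"
      using seq_monosub[of "\<lambda>k. g n (s k)"] by (elim exE conjE) simp
    have "Bseq (\<lambda>k. g n (s (f k)))" using b by (intro BseqI'[of _ 1]) auto
    then have "convergent (\<lambda>k. g n (s (f k)))" using Bseq_monoseq_convergent f(2) by blast
    then show "\<exists>r'. strict_mono r' \<and> convergent (\<lambda>k. g n ((s \<circ> r') k))"
      using f(1) by (auto simp: o_def)
  qed
  have "convergent (\<lambda>k. g n (diagseq k))" for n
  proof -
    have "convergent (\<lambda>i. g n ((diagseq \<circ> (+) (Suc n)) i))"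
    proof (rule diagseq_holds)
      fix r s n assume r: "strict_mono (r::nat\<Rightarrow>nat)" and c: "convergent (\<lambda>k. g n (s k))"
      from c obtain l where "(\<lambda>k. g n (s k)) \<longlonglongrightarrow> l" by (auto simp: convergent_def)
      from LIMSEQ_subseq_LIMSEQ[OF this r] show "convergent (\<lambda>k. g n ((s \<circ> r) k))"
        by (auto simp: convergent_def o_def)
    qed
    then have "convergent (\<lambda>i. g n (diagseq (i + Suc n)))" by (simp add: ac_simps o_def)
    then show ?thesis using convergent_ignore_initial_segment by blast
  qed
  then show ?thesis using subseq_diagseq by blast
qed

lemma nn_integral_count_space_infsum:
  fixes f :: "'b \<Rightarrow> real"
  assumes "f summable_on A" "\<And>x. x \<in> A \<Longrightarrow> f x \<ge> 0"
  shows "(\<integral>\<^sup>+x. ennreal (f x) \<partial>count_space A) = ennreal (infsum f A)"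
proof -
  have a: "Infinite_Set_Sum.abs_summable_on f A"
    using abs_summable_equivalent summable_on_iff_abs_summable_on_real assms(1) by metis
  show ?thesis using nn_integral_conv_infsetsum[OF a assms(2)] infsetsum_infsum[OF a] by simp
qed

lemma space_seq[simp]: "space seq_space = UNIV"
  by (auto simp: seq_space_def space_PiM PiE_iff)

lemma sets_cylinder[measurable]: "cylinder u \<in> sets seq_space"
proof -
  have "{\<omega> \<in> space seq_space. \<forall>j<length u. \<omega> j = u!j} \<in> sets seq_space"
    unfolding seq_space_def by measurable
  then show ?thesis by (simp add: cylinder_def)
qed

lemma word_eq_iff2: "word \<omega> i n = v \<longleftrightarrow> length v = n \<and> (\<forall>j<n. \<omega> (i+j) = v!j)"
  by (auto simp: list_eq_iff_nth_eq)

lemma measurable_word[measurable]: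
  "(\<lambda>\<omega>. word \<omega> i n) \<in> measurable (seq_space :: (nat \<Rightarrow> 'c::countable) measure) (count_space UNIV)"
proof (rule iffD2[OF measurable_count_space_eq_countable])
  show "countable (UNIV :: 'c list set)" by simp
  have "(\<lambda>\<omega>. word \<omega> i n) -` {v} \<inter> space seq_space \<in> sets (seq_space :: (nat \<Rightarrow> 'c::countable) measure)"
    for v :: "'c list"
  proof -
    have "{\<omega> \<in> space seq_space. length v = n \<and> (\<forall>j<n. \<omega> (i+j) = v!j)} \<in> sets (seq_space :: (nat \<Rightarrow> 'c::countable) measure)"
      unfolding seq_space_def by measurable
    moreover have "(\<lambda>\<omega>. word \<omega> i n) -` {v} \<inter> space seq_space = {\<omega> \<in> space (seq_space :: (nat \<Rightarrow> 'c::countable) measure). length v = n \<and> (\<forall>j<n. \<omega> (i+j) = v!j)}"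
      by (auto simp: word_eq_iff2)
    ultimately show ?thesis by simp
  qed
  then show "(\<lambda>\<omega>. word \<omega> i n) \<in> space (seq_space :: (nat \<Rightarrow> 'c::countable) measure) \<rightarrow> UNIV \<and>
    (\<forall>v\<in>UNIV. (\<lambda>\<omega>. word \<omega> i n) -` {v} \<inter> space (seq_space :: (nat \<Rightarrow> 'c::countable) measure) \<in> sets (seq_space :: (nat \<Rightarrow> 'c::countable) measure))"
    by simp
qed

lemma sets_word_set[measurable]:
  "{\<omega>. word \<omega> i n \<in> W} \<in> sets (seq_space :: (nat \<Rightarrow> 'c::countable) measure)"
proof -
  have "(\<lambda>\<omega>. word \<omega> i n) -` W \<inter> space seq_space \<in> sets (seq_space :: (nat \<Rightarrow> 'c::countable) measure)"
    by (rule measurable_sets[OF measurable_word]) simp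
  then show ?thesis by (simp add: vimage_def)
qed

lemma cylinder_word: "cylinder v = {\<omega>. word \<omega> 0 (length v) = v}"
  by (auto simp: cylinder_def word_eq_iff2)

lemma seq_measure_eqI:
  fixes P Q :: "(nat \<Rightarrow> 'c::countable) measure"
  assumes sP: "sets P = sets seq_space" and sQ: "sets Q = sets seq_space" and fP: "finite_measure P"
    and eq: "\<And>u. emeasure P (cylinder u) = emeasure Q (cylinder u)"
  shows "P = Q"
proof (rule measure_eqI_PiM_infinite[where I=UNIV and M="\<lambda>_. count_space UNIV"])
  show "sets P = sets (PiM UNIV (\<lambda>_. count_space UNIV))" using sP by (simp add: seq_space_def)
  show "sets Q = sets (PiM UNIV (\<lambda>_. count_space UNIV))" using sQ by (simp add: seq_space_def)
  show "finite_measure P" by fact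
  fix J :: "nat set" and A :: "nat \<Rightarrow> 'c set" assume J: "finite J"
  obtain n where n: "J \<subseteq> {..<n}" using finite_nat_bounded[OF J] by blast
  define V where "V = {v :: 'c list. length v = n \<and> (\<forall>j\<in>J. v!j \<in> A j)}"
  have X: "prod_emb UNIV (\<lambda>_. count_space UNIV) J (Pi\<^sub>E J A) = (\<Union>v\<in>V. cylinder v)"
  proof (intro equalityI subsetI)
    fix \<omega> assume "\<omega> \<in> prod_emb UNIV (\<lambda>_. count_space UNIV) J (Pi\<^sub>E J A)"
    then have "\<forall>j\<in>J. \<omega> j \<in> A j" by (auto simp: prod_emb_def PiE_iff)
    then have "word \<omega> 0 n \<in> V" "\<omega> \<in> cylinder (word \<omega> 0 n)" using n
      by (auto simp: V_def cylinder_def)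
    then show "\<omega> \<in> (\<Union>v\<in>V. cylinder v)" by blast
  next
    fix \<omega> assume "\<omega> \<in> (\<Union>v\<in>V. cylinder v)"
    then obtain v where "v \<in> V" "\<omega> \<in> cylinder v" by blast
    then have "\<forall>j\<in>J. \<omega> j \<in> A j" using n by (auto simp: V_def cylinder_def)
    then show "\<omega> \<in> prod_emb UNIV (\<lambda>_. count_space UNIV) J (Pi\<^sub>E J A)"
      by (auto simp: prod_emb_def PiE_iff)
  qed
  have d: "disjoint_family_on cylinder V"
    unfolding disjoint_family_on_def
  proof (intro ballI impI)
    fix v v' assume "v \<in> V" "v' \<in> V" "v \<noteq> v'"
    then have "length v = length v'" by (simp add: V_def)
    then show "cylinder v \<inter> cylinder v' = {}" using \<open>v \<noteq> v'\<close> by (auto simp: cylinder_word)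
  qed
  have c: "countable V" by simp
  have "emeasure P (\<Union>v\<in>V. cylinder v) = (\<integral>\<^sup>+v. emeasure P (cylinder v) \<partial>count_space V)"
    by (rule emeasure_UN_countable[OF _ c d]) (simp add: sP sets_cylinder)
  also have "\<dots> = (\<integral>\<^sup>+v. emeasure Q (cylinder v) \<partial>count_space V)" by (simp add: eq)
  also have "\<dots> = emeasure Q (\<Union>v\<in>V. cylinder v)"
    by (rule emeasure_UN_countable[symmetric, OF _ c d]) (simp add: sQ sets_cylinder)
  finally show "emeasure P (prod_emb UNIV (\<lambda>_. count_space UNIV) J (Pi\<^sub>E J A)) =
      emeasure Q (prod_emb UNIV (\<lambda>_. count_space UNIV) J (Pi\<^sub>E J A))" by (simp add: X)
qed



definition zz :: "(nat \<Rightarrow> 'a) \<Rightarrow> (nat \<Rightarrow> 'b) \<Rightarrow> nat \<Rightarrow> 'a \<times> 'b" where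
  "zz x y i = (x i, y i)"

lemma map_fst_word_zz: "map fst (word (zz x y) i n) = word x i n"
  by (simp add: word_def zz_def)
lemma map_snd_word_zz: "map snd (word (zz x y) i n) = word y i n"
  by (simp add: word_def zz_def)

locale core =
  fixes \<mu> :: "(nat \<Rightarrow> 'a::countable) measure" and S :: "nat set" and x :: "nat \<Rightarrow> 'a"
    and R :: "nat \<Rightarrow> nat"
  assumes mu: "shift_invariant_prob \<mu>" and nx: "normal \<mu> x" and R: "strict_mono R"
    and conv: "\<And>w. convergent (\<lambda>k. frq (zz x (\<lambda>n. n \<in> S)) {w} (length w) (R k))"
begin

abbreviation "y \<equiv> (\<lambda>n. n \<in> S)"
abbreviation "z \<equiv> zz x y"
abbreviation T :: "nat \<Rightarrow> ('a \<times> bool) list set" where "T n \<equiv> {w. length w = n}"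

definition L :: "('a \<times> bool) list \<Rightarrow> real" where
  "L w = lim (\<lambda>k. frq z {w} (length w) (R k))"

lemma L_lim: "(\<lambda>k. frq z {w} (length w) (R k)) \<longlonglongrightarrow> L w"
  unfolding L_def using conv[of w] by (simp add: convergent_LIMSEQ_iff)

lemma L_nonneg: "0 \<le> L w"
  by (rule LIMSEQ_le_const[OF L_lim]) (auto intro: frq_nonneg)

lemma L_le1: "L w \<le> 1"
  by (rule LIMSEQ_le_const2[OF L_lim]) (auto intro: frq_le1)

lemma evR: "eventually (\<lambda>k. 0 < R k) sequentially"
proof -
  have "\<forall>k\<ge>1. 0 < R k" using seq_suble[OF R] by (metis le_trans less_one not_le)
  then show ?thesis unfolding eventually_sequentially by blast
qed

lemma mu_prob: "prob_space \<mu>" and mu_sets: "sets \<mu> = sets seq_space"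
  using mu by (auto simp: shift_invariant_prob_def)

lemma mu_lim: "(\<lambda>k. frq x {u} (length u) (R k)) \<longlonglongrightarrow> measure \<mu> (cylinder u)"
proof -
  have e: "frq x {u} (length u) m = real (card {i. i < m \<and> (\<forall>j<length u. x (i+j) = u!j)}) / real m" for m
    by (simp add: frq_def cnt_def word_eq_iff)
  have "(\<lambda>m. frq x {u} (length u) m) \<longlonglongrightarrow> measure \<mu> (cylinder u)"
    using nx unfolding normal_def e by blast
  from LIMSEQ_subseq_LIMSEQ[OF this R] show ?thesis by (simp add: o_def)
qed

lemma sum_lim:
  assumes F: "finite F" "F \<subseteq> T n"
  shows "(\<lambda>k. frq z F n (R k)) \<longlonglongrightarrow> sum L F"
proof -
  have e: "frq z F n (R k) = (\<Sum>w\<in>F. frq z {w} (length w) (R k))" for k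
  proof -
    have "frq z F n (R k) = (\<Sum>w\<in>F. frq z {w} n (R k))" by (rule frq_finite_sum[OF F(1)])
    also have "\<dots> = (\<Sum>w\<in>F. frq z {w} (length w) (R k))"
      by (rule sum.cong) (use F(2) in auto)
    finally show ?thesis .
  qed
  show ?thesis unfolding e by (intro tendsto_sum L_lim)
qed

definition Fu :: "'a list \<Rightarrow> ('a \<times> bool) list set" where
  "Fu u = {w. length w = length u \<and> map fst w = u}"

lemma Fu_finite: "finite (Fu u)"
proof -
  have "Fu u \<subseteq> (\<lambda>v. zip u v) ` {v :: bool list. length v = length u}"
  proof
    fix w assume "w \<in> Fu u"
    then have "w = zip u (map snd w)" "length (map snd w) = length u"
      by (auto simp: Fu_def zip_map_fst_snd)
    then show "w \<in> (\<lambda>v. zip u v) ` {v :: bool list. length v = length u}" by blast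
  qed
  moreover have "finite {v :: bool list. set v \<subseteq> UNIV \<and> length v = length u}"
    by (rule finite_lists_length_eq) simp
  ultimately show ?thesis by (auto intro: finite_subset[OF _ finite_imageI])
qed

lemma Fu_sub: "Fu u \<subseteq> T (length u)" by (auto simp: Fu_def)

lemma cnt_Fu: "cnt z (Fu u) (length u) m = cnt x {u} (length u) m"
  unfolding cnt_def Fu_def by (simp add: map_fst_word_zz)

lemma sum_Fu: "sum L (Fu u) = measure \<mu> (cylinder u)"
proof -
  have "(\<lambda>k. frq z (Fu u) (length u) (R k)) \<longlonglongrightarrow> sum L (Fu u)"
    by (rule sum_lim[OF Fu_finite Fu_sub])
  moreover have "(\<lambda>k. frq z (Fu u) (length u) (R k)) = (\<lambda>k. frq x {u} (length u) (R k))"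
    by (simp add: frq_def cnt_Fu)
  ultimately show ?thesis using mu_lim LIMSEQ_unique by metis
qed

lemma sumT_le1: "finite F \<Longrightarrow> F \<subseteq> T n \<Longrightarrow> sum L F \<le> 1"
  by (rule LIMSEQ_le_const2[OF sum_lim]) (auto intro: frq_le1)

lemma L_summable: "L summable_on T n"
proof (rule nonneg_bdd_above_summable_on)
  show "bdd_above (sum L ` {F. F \<subseteq> T n \<and> finite F})"
    by (rule bdd_aboveI2[of _ _ 1]) (auto intro: sumT_le1)
qed (auto intro: L_nonneg)

lemma L_summable_sub: "W \<subseteq> T n \<Longrightarrow> L summable_on W"
  by (rule summable_on_subset_banach[OF L_summable])

lemma L_infsum1: "infsum L (T n) = 1"
proof (rule antisym)
  show "infsum L (T n) \<le> 1"
    by (rule infsum_le_finite_sums[OF L_summable]) (auto intro: sumT_le1)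
  show "1 \<le> infsum L (T n)"
  proof (rule field_le_epsilon)
    fix e :: real assume e: "0 < e"
    interpret P: prob_space \<mu> by (rule mu_prob)
    define Ua where "Ua k = {u :: 'a list. length u = n \<and> to_nat u < k}" for k
    define A where "A k = (\<Union>u\<in>Ua k. cylinder u)" for k
    have finUa: "finite (Ua k)" for k
    proof -
      have "Ua k \<subseteq> to_nat -` {..<k}" by (auto simp: Ua_def)
      moreover have "finite (to_nat -` {..<k} :: 'a list set)"
        by (rule finite_vimageI) (auto simp: inj_to_nat)
      ultimately show ?thesis by (rule finite_subset)
    qed
    have Asets: "A k \<in> sets \<mu>" for k
      unfolding A_def mu_sets by (intro sets.finite_UN finUa) (auto simp: sets_cylinder)
    have inc: "incseq A" unfolding incseq_def A_def by (intro allI impI UN_mono) (auto simp: Ua_def)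
    have U: "(\<Union>k. A k) = space \<mu>"
    proof -
      have "\<omega> \<in> A (Suc (to_nat (word \<omega> 0 n)))" for \<omega>
        unfolding A_def Ua_def cylinder_def by (rule UN_I[of "word \<omega> 0 n"]) auto
      moreover have "space \<mu> = UNIV" by (simp add: sets_eq_imp_space_eq[OF mu_sets])
      ultimately show ?thesis by blast
    qed
    have "(\<lambda>k. measure \<mu> (A k)) \<longlonglongrightarrow> measure \<mu> (\<Union>k. A k)"
      by (rule P.finite_Lim_measure_incseq) (use Asets inc in auto)
    then have "(\<lambda>k. measure \<mu> (A k)) \<longlonglongrightarrow> 1" using U P.prob_space by simp
    then have "eventually (\<lambda>k. 1 - e < measure \<mu> (A k)) sequentially"
      by (rule order_tendstoD(1)) (use e in simp)
    then obtain k where k: "1 - e < measure \<mu> (A k)" by (auto simp: eventually_sequentially)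
    define F where "F = (\<Union>u\<in>Ua k. Fu u)"
    have finF: "finite F" unfolding F_def by (intro finite_UN_I finUa Fu_finite)
    have FT: "F \<subseteq> T n" unfolding F_def Ua_def Fu_def by auto
    have "measure \<mu> (A k) \<le> (\<Sum>u\<in>Ua k. measure \<mu> (cylinder u))"
      unfolding A_def
      by (rule P.finite_measure_subadditive_finite[OF finUa]) (auto simp: mu_sets sets_cylinder)
    also have "\<dots> = (\<Sum>u\<in>Ua k. sum L (Fu u))" by (simp add: sum_Fu)
    also have "\<dots> = sum L F" unfolding F_def
      by (rule sum.UNION_disjoint[symmetric]) (use finUa Fu_finite in \<open>auto simp: Fu_def\<close>)
    also have "\<dots> \<le> infsum L (T n)"
      by (rule finite_sum_le_infsum[OF L_summable finF FT]) (simp add: L_nonneg)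
    finally show "1 \<le> infsum L (T n) + e" using k by simp
  qed
qed

lemma KL:
  assumes W: "W \<subseteq> T n"
  shows "(\<lambda>k. frq z W n (R k)) \<longlonglongrightarrow> infsum L W"
proof -
  have sW: "L summable_on W" by (rule L_summable_sub[OF W])
  have sW': "L summable_on (T n - W)" by (rule L_summable_sub[of "T n - W" n]) auto
  have un: "W \<union> (T n - W) = T n" using W by auto
  have tot: "infsum L W + infsum L (T n - W) = 1"
    using infsum_Un_disjoint[OF sW sW'] un L_infsum1 by simp
  show ?thesis
  proof (rule tendstoI)
    fix e :: real assume e: "0 < e"
    obtain F where F: "finite F" "F \<subseteq> W" "dist (sum L F) (infsum L W) \<le> e/4"
      using infsum_finite_approximation[OF sW, of "e/4"] e by auto
    obtain G where G: "finite G" "G \<subseteq> T n - W" "dist (sum L G) (infsum L (T n - W)) \<le> e/4"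
      using infsum_finite_approximation[OF sW', of "e/4"] e by auto
    have FT: "F \<subseteq> T n" using F(2) W by blast
    have limF: "(\<lambda>k. frq z F n (R k)) \<longlonglongrightarrow> sum L F" by (rule sum_lim[OF F(1) FT])
    have GT: "G \<subseteq> T n" using G(2) by blast
    have limG: "(\<lambda>k. frq z G n (R k)) \<longlonglongrightarrow> sum L G" by (rule sum_lim[OF G(1) GT])
    have evF: "eventually (\<lambda>k. infsum L W - e/2 < frq z F n (R k)) sequentially"
    proof (rule order_tendstoD(1)[OF limF])
      show "infsum L W - e / 2 < sum L F" using F(3) e unfolding dist_real_def abs_le_iff by linarith
    qed
    have evG: "eventually (\<lambda>k. infsum L (T n - W) - e/2 < frq z G n (R k)) sequentially"
    proof (rule order_tendstoD(1)[OF limG])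
      show "infsum L (T n - W) - e / 2 < sum L G" using G(3) e unfolding dist_real_def abs_le_iff by linarith
    qed
    show "eventually (\<lambda>k. dist (frq z W n (R k)) (infsum L W) < e) sequentially"
      using evF evG evR
    proof eventually_elim
      case (elim k)
      have a: "frq z F n (R k) \<le> frq z W n (R k)" by (rule frq_mono[OF F(2)])
      have b: "frq z G n (R k) \<le> frq z (T n - W) n (R k)" by (rule frq_mono[OF G(2)])
      have c: "frq z W n (R k) + frq z (T n - W) n (R k) = 1" by (rule frq_compl[OF elim(3)])
      show ?case using a b c elim(1,2) tot e unfolding dist_real_def by linarith
    qed
  qed
qed

lemma L_ext_summable: "(\<lambda>a. L (v @ [a])) summable_on UNIV"
  and L_ext: "infsum (\<lambda>a. L (v @ [a])) UNIV = L v"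
proof -
  define W where "W = {v @ [a] |a. True}"
  have WT: "W \<subseteq> T (Suc (length v))" by (auto simp: W_def)
  have im: "W = (\<lambda>a. v @ [a]) ` UNIV" by (auto simp: W_def)
  have inj: "inj (\<lambda>a. v @ [a])" by (auto simp: inj_def)
  have "(\<lambda>k. frq z W (Suc (length v)) (R k)) \<longlonglongrightarrow> infsum L W" by (rule KL[OF WT])
  moreover have "(\<lambda>k. frq z W (Suc (length v)) (R k)) = (\<lambda>k. frq z {v} (length v) (R k))"
  proof -
    have "cnt z W (Suc (length v)) m = cnt z {v} (length v) m" for m
      unfolding W_def by (rule cnt_ext)
    then show ?thesis by (simp add: frq_def)
  qed
  ultimately have "infsum L W = L v" using L_lim LIMSEQ_unique by metis
  then show "infsum (\<lambda>a. L (v @ [a])) UNIV = L v"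
    using infsum_reindex[OF inj, of L] im by (simp add: o_def)
  show "(\<lambda>a. L (v @ [a])) summable_on UNIV"
    using summable_on_reindex[OF inj, of L] L_summable_sub[OF WT] im by (simp add: o_def)
qed

lemma L_ext_le: "L (v @ [a]) \<le> L v"
proof -
  have "sum (\<lambda>a. L (v @ [a])) {a} \<le> infsum (\<lambda>a. L (v @ [a])) UNIV"
    by (rule finite_sum_le_infsum[OF L_ext_summable]) (auto simp: L_nonneg)
  then show ?thesis using L_ext by simp
qed

lemma L_shift: "infsum L {b # w |b. True} = L w"
proof -
  define W where "W = {b # w |b. True}"
  have WT: "W \<subseteq> T (Suc (length w))" by (auto simp: W_def)
  have l1: "(\<lambda>k. frq z W (Suc (length w)) (R k)) \<longlonglongrightarrow> infsum L W" by (rule KL[OF WT])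
  have d: "(\<lambda>k. frq z W (Suc (length w)) (R k) - frq z {w} (length w) (R k)) \<longlonglongrightarrow> 0"
  proof (rule Lim_null_comparison)
    have "((\<lambda>n. 1 / real n) \<circ> R) \<longlonglongrightarrow> 0"
      by (rule LIMSEQ_subseq_LIMSEQ[OF lim_1_over_n R])
    then show "(\<lambda>k. 1 / real (R k)) \<longlonglongrightarrow> 0" by (simp add: o_def)
    show "eventually (\<lambda>k. norm (frq z W (Suc (length w)) (R k) - frq z {w} (length w) (R k)) \<le> 1 / real (R k)) sequentially"
    proof (rule always_eventually, rule allI)
      fix k
      have a: "real (cnt z W (Suc (length w)) (R k)) \<le> real (cnt z {w} (length w) (R k)) + 1"
        using cnt_shift(1)[of z w "R k"] unfolding W_def by linarith
      have b: "real (cnt z {w} (length w) (R k)) \<le> real (cnt z W (Suc (length w)) (R k)) + 1"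
        using cnt_shift(2)[of z w "R k"] unfolding W_def by linarith
      have "\<bar>real (cnt z W (Suc (length w)) (R k)) - real (cnt z {w} (length w) (R k))\<bar> \<le> 1"
        using a b by linarith
      then have ab: "\<bar>real (cnt z W (Suc (length w)) (R k)) - real (cnt z {w} (length w) (R k))\<bar> / real (R k) \<le> 1 / real (R k)"
        by (rule divide_right_mono) simp
      have eq: "frq z W (Suc (length w)) (R k) - frq z {w} (length w) (R k) =
         (real (cnt z W (Suc (length w)) (R k)) - real (cnt z {w} (length w) (R k))) / real (R k)"
        unfolding frq_def by (rule diff_divide_distrib[symmetric])
      show "norm (frq z W (Suc (length w)) (R k) - frq z {w} (length w) (R k)) \<le> 1 / real (R k)"
        unfolding eq real_norm_def abs_divide abs_of_nat using ab .
    qed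
  qed
  have "(\<lambda>k. frq z {w} (length w) (R k) + (frq z W (Suc (length w)) (R k) - frq z {w} (length w) (R k))) \<longlonglongrightarrow> L w + 0"
    by (intro tendsto_add L_lim d)
  then have "(\<lambda>k. frq z W (Suc (length w)) (R k)) \<longlonglongrightarrow> L w" by simp
  from LIMSEQ_unique[OF l1 this] show ?thesis unfolding W_def .
qed

end


context core begin

abbreviation MM :: "nat \<Rightarrow> ('a \<times> bool) measure" where "MM \<equiv> (\<lambda>_. count_space UNIV)"

definition K :: "('a \<times> bool) list \<Rightarrow> ('a \<times> bool) measure" where
  "K v = (if 0 < L v then density (count_space UNIV) (\<lambda>a. ennreal (L (v @ [a]) / L v))
          else return (count_space UNIV) undefined)"

definition PP :: "nat \<Rightarrow> (nat \<Rightarrow> 'a \<times> bool) \<Rightarrow> ('a \<times> bool) measure" where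
  "PP i \<omega> = K (map \<omega> [0..<i])"

lemma K_sets: "sets (K v) = sets (count_space UNIV)" by (simp add: K_def)
lemma K_space: "space (K v) = UNIV" by (simp add: K_def)

lemma K_prob: "prob_space (K v)"
proof (cases "0 < L v")
  case True
  have s: "(\<lambda>a. L (v@[a]) * inverse (L v)) summable_on UNIV"
    by (rule summable_on_cmult_left[OF L_ext_summable])
  have "infsum (\<lambda>a. L (v@[a]) * inverse (L v)) UNIV = infsum (\<lambda>a. L (v@[a])) UNIV * inverse (L v)"
    by (rule infsum_cmult_left) (simp add: L_ext_summable)
  also have "\<dots> = 1" using True by (simp add: L_ext)
  finally have i: "infsum (\<lambda>a. L (v@[a]) / L v) UNIV = 1" by (simp add: divide_inverse)
  have s': "(\<lambda>a. L (v@[a]) / L v) summable_on UNIV" using s by (simp add: divide_inverse)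
  have "emeasure (K v) UNIV = (\<integral>\<^sup>+a. ennreal (L (v@[a]) / L v) \<partial>count_space UNIV)"
    using True by (simp add: K_def emeasure_density)
  also have "\<dots> = ennreal (infsum (\<lambda>a. L (v@[a]) / L v) UNIV)"
    by (rule nn_integral_count_space_infsum[OF s']) (use True L_nonneg in simp)
  also have "\<dots> = 1" using i by simp
  finally show ?thesis by (intro prob_spaceI) (simp add: K_space)
next
  case False
  then show ?thesis by (simp add: K_def prob_space_return)
qed

lemma K_single: "emeasure (K v) {a} * ennreal (L v) = ennreal (L (v@[a]))"
proof (cases "0 < L v")
  case True
  have "emeasure (K v) {a} = ennreal (L (v@[a]) / L v)"
    using True by (simp add: K_def emeasure_density)
  moreover have "ennreal (L (v@[a]) / L v) * ennreal (L v) = ennreal (L (v@[a]) / L v * L v)"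
    by (rule ennreal_mult''[symmetric]) (use True in simp)
  ultimately have "emeasure (K v) {a} * ennreal (L v) = ennreal (L (v@[a]) / L v * L v)"
    by simp
  also have "L (v@[a]) / L v * L v = L (v@[a])" using True by simp
  finally show ?thesis .
next
  case False
  then have "L v = 0" using L_nonneg[of v] by simp
  moreover have "L (v@[a]) = 0" using L_ext_le[of v a] L_nonneg[of "v@[a]"] \<open>L v = 0\<close> by simp
  ultimately show ?thesis by simp
qed

lemma PiMn_eq: "PiM {0..<n} MM = count_space (PiE {0..<n} (\<lambda>_. UNIV))"
  by (rule count_space_PiM_finite) auto

lemma sets_PiMn: "sets (PiM {0..<n} MM) = Pow (space (PiM {0..<n} MM))"
  by (simp add: PiMn_eq)

lemma PP_meas: "PP i \<in> measurable (PiM {0..<i} MM) (subprob_algebra (MM i))"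
  unfolding PiMn_eq
  by (auto simp: space_subprob_algebra PP_def K_sets prob_space_imp_subprob_space[OF K_prob])

interpretation IT: Ionescu_Tulcea PP MM
  by (rule Ionescu_Tulcea.intro) (simp_all add: PP_meas PP_def K_prob)

definition lam :: "(nat \<Rightarrow> 'a \<times> bool) measure" where "lam = IT.PF.lim"

lemma om0: "(\<lambda>_. undefined) \<in> space (PiM {0..<0} MM)" by (simp add: space_PiM)

definition cyl :: "nat \<Rightarrow> ('a \<times> bool) list \<Rightarrow> (nat \<Rightarrow> 'a \<times> bool) set" where
  "cyl n w = {\<omega> \<in> space (PiM {0..<n} MM). \<forall>j<n. \<omega> j = w!j}"

lemma cyl_sets: "cyl n w \<in> sets (PiM {0..<n} MM)"
  unfolding sets_PiMn cyl_def by auto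

lemma L0: "L [] = 1"
proof -
  have "eventually (\<lambda>k. frq z {[]} (length ([]::('a\<times>bool) list)) (R k) = 1) sequentially"
    using evR
  proof eventually_elim
    case (elim k)
    have "cnt z {[]} 0 (R k) = R k" unfolding cnt_def by (simp add: word_def)
    then show ?case using elim by (simp add: frq_def)
  qed
  then have "(\<lambda>k. frq z {[]} (length ([]::('a\<times>bool) list)) (R k)) \<longlonglongrightarrow> 1"
    by (rule tendsto_eventually)
  from LIMSEQ_unique[OF L_lim this] show ?thesis .
qed

lemma eP_cyl:
  assumes \<omega>: "\<omega> \<in> space (PiM {0..<n} MM)" and lv: "length v = n"
  shows "emeasure (IT.eP n \<omega>) (cyl (Suc n) (v @ [a])) = emeasure (K v) {a} * indicator (cyl n v) \<omega>"
proof -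
  have "emeasure (IT.eP n \<omega>) (cyl (Suc n) (v @ [a])) =
      emeasure (PP n \<omega>) ((\<lambda>b. fun_upd \<omega> n b) -` cyl (Suc n) (v @ [a]) \<inter> space (MM n))"
    by (rule IT.emeasure_eP[OF \<omega> cyl_sets])
  also have pre: "(\<lambda>b. fun_upd \<omega> n b) -` cyl (Suc n) (v @ [a]) \<inter> space (MM n) =
      (if \<omega> \<in> cyl n v then {a} else {})"
  proof -
    have ext: "fun_upd \<omega> n b \<in> space (PiM {0..<Suc n} MM)" for b
      using \<omega> by (auto simp: space_PiM PiE_iff extensional_def)
    have iff: "(\<forall>j<Suc n. (fun_upd \<omega> n b) j = (v @ [a]) ! j) \<longleftrightarrow> (\<forall>j<n. \<omega> j = v ! j) \<and> b = a" for b
    proof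
      assume h: "\<forall>j<Suc n. (fun_upd \<omega> n b) j = (v @ [a]) ! j"
      have "\<omega> j = v ! j" if "j < n" for j using h[rule_format, of j] that lv by (simp add: nth_append)
      moreover have "b = a" using h[rule_format, of n] lv by (simp add: nth_append)
      ultimately show "(\<forall>j<n. \<omega> j = v ! j) \<and> b = a" by blast
    next
      assume h: "(\<forall>j<n. \<omega> j = v ! j) \<and> b = a"
      show "\<forall>j<Suc n. (fun_upd \<omega> n b) j = (v @ [a]) ! j"
      proof (intro allI impI)
        fix j assume "j < Suc n"
        then consider "j < n" | "j = n" by linarith
        then show "(fun_upd \<omega> n b) j = (v @ [a]) ! j"
          by cases (use h lv in \<open>simp_all add: nth_append\<close>)
      qed
    qed
    show ?thesis unfolding cyl_def using ext iff \<omega> by auto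
  qed
  also have "emeasure (PP n \<omega>) (if \<omega> \<in> cyl n v then {a} else {}) = emeasure (K v) {a} * indicator (cyl n v) \<omega>"
  proof (cases "\<omega> \<in> cyl n v")
    case True
    then have "map \<omega> [0..<n] = v" using lv by (auto simp: cyl_def list_eq_iff_nth_eq)
    then show ?thesis using True by (simp add: PP_def)
  next
    case False
    then show ?thesis by simp
  qed
  finally show ?thesis .
qed

lemma C_cyl: "length w = n \<Longrightarrow> emeasure (IT.C 0 n (\<lambda>_. undefined)) (cyl n w) = ennreal (L w)"
proof (induction n arbitrary: w)
  case 0
  then have w: "w = []" by simp
  have "cyl 0 w = space (PiM {0..<0} MM)" by (simp add: cyl_def)
  then show ?case using w L0 om0 by simp
next
  case (Suc n)
  obtain v a where w: "w = v @ [a]" using Suc.prems by (cases w rule: rev_cases) auto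
  have lv: "length v = n" using Suc.prems w by simp
  define C where "C = IT.C 0 n (\<lambda>_. undefined)"
  have sC: "sets C = sets (PiM {0..<n} MM)" unfolding C_def using IT.sets_C[OF om0, of n] by simp
  have spC: "space C = space (PiM {0..<n} MM)" unfolding C_def using IT.space_C[OF om0, of n] by simp
  have ne: "space C \<noteq> {}" unfolding spC by simp
  have meas: "IT.eP n \<in> measurable C (subprob_algebra (PiM {0..<Suc n} MM))"
    by (subst measurable_cong_sets[OF sC refl]) (rule IT.measurable_eP)
  have "IT.C 0 (Suc n) (\<lambda>_. undefined) = C \<bind> IT.eP n" by (simp add: C_def)
  then have "emeasure (IT.C 0 (Suc n) (\<lambda>_. undefined)) (cyl (Suc n) w) =
      (\<integral>\<^sup>+\<omega>. emeasure (IT.eP n \<omega>) (cyl (Suc n) w) \<partial>C)"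
    using emeasure_bind[OF ne meas cyl_sets] by simp
  also have "\<dots> = (\<integral>\<^sup>+\<omega>. emeasure (K v) {a} * indicator (cyl n v) \<omega> \<partial>C)"
    by (rule nn_integral_cong) (simp add: w eP_cyl lv spC)
  also have "\<dots> = emeasure (K v) {a} * emeasure C (cyl n v)"
    by (rule nn_integral_cmult_indicator) (simp add: sC cyl_sets)
  also have "emeasure C (cyl n v) = ennreal (L v)" unfolding C_def by (rule Suc.IH[OF lv])
  finally show ?case using K_single w by simp
qed

lemma lam_sets: "sets lam = sets seq_space" by (simp add: lam_def seq_space_def)
lemma lam_space: "space lam = UNIV" by (simp add: sets_eq_imp_space_eq[OF lam_sets])

lemma lam_cyl: "emeasure lam (cylinder w) = ennreal (L w)"
proof -
  define n where "n = length w"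
  have e: "cylinder w = prod_emb UNIV MM {0..<n} (cyl n w)"
    by (auto simp: cylinder_def cyl_def prod_emb_def space_PiM PiE_iff n_def)
  have "emeasure lam (cylinder w) = emeasure (IT.CI {0..<n}) (cyl n w)"
    unfolding e lam_def by (rule IT.lim) (auto simp: cyl_sets)
  also have "\<dots> = emeasure (IT.C 0 n (\<lambda>_. undefined)) (prod_emb {0..<n} MM {0..<n} (cyl n w))"
    by (rule IT.emeasure_CI) (auto simp: cyl_sets)
  also have "prod_emb {0..<n} MM {0..<n} (cyl n w) = cyl n w"
    by (rule prod_emb_id) (auto simp: cyl_def space_PiM)
  finally show ?thesis using C_cyl[of w n] n_def by simp
qed

lemma lam_prob: "prob_space lam"
proof (rule prob_spaceI)
  have "cylinder ([] :: ('a \<times> bool) list) = UNIV" by (simp add: cylinder_def)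
  then show "emeasure lam (space lam) = 1" using lam_cyl[of "[]"] L0 lam_space by simp
qed

lemma lam_measure_cyl: "measure lam (cylinder w) = L w"
  by (simp add: measure_def lam_cyl L_nonneg)

lemma infsum_compl: "W \<subseteq> T n \<Longrightarrow> infsum L W + infsum L (T n - W) = 1"
proof -
  assume W: "W \<subseteq> T n"
  have sW: "L summable_on W" by (rule L_summable_sub[OF W])
  have sW': "L summable_on (T n - W)" by (rule L_summable_sub[of "T n - W" n]) auto
  have un: "W \<union> (T n - W) = T n" using W by auto
  show ?thesis using infsum_Un_disjoint[OF sW sW'] un L_infsum1 by simp
qed

lemma lam_fin:
  assumes F: "finite F" "F \<subseteq> T n"
  shows "measure lam {\<omega>. word \<omega> 0 n \<in> F} = sum L F"
proof -
  interpret P: prob_space lam by (rule lam_prob)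
  have e: "{\<omega>. word \<omega> 0 n \<in> F} = (\<Union>w\<in>F. cylinder w)"
  proof (intro equalityI subsetI)
    fix \<omega> assume "\<omega> \<in> {\<omega>. word \<omega> 0 n \<in> F}"
    then show "\<omega> \<in> (\<Union>w\<in>F. cylinder w)" by (intro UN_I[of "word \<omega> 0 n"]) (auto simp: cylinder_word)
  next
    fix \<omega> assume "\<omega> \<in> (\<Union>w\<in>F. cylinder w)"
    then obtain w where "w \<in> F" "\<omega> \<in> cylinder w" by blast
    then show "\<omega> \<in> {\<omega>. word \<omega> 0 n \<in> F}" using F(2) by (auto simp: cylinder_word)
  qed
  have d: "disjoint_family_on cylinder F"
    unfolding disjoint_family_on_def
  proof (intro ballI impI)
    fix v v' assume "v \<in> F" "v' \<in> F" "v \<noteq> v'"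
    then have "length v = length v'" using F(2) by auto
    then show "cylinder v \<inter> cylinder v' = {}" using \<open>v \<noteq> v'\<close> by (auto simp: cylinder_word)
  qed
  have "measure lam (\<Union>w\<in>F. cylinder w) = (\<Sum>w\<in>F. measure lam (cylinder w))"
    by (rule P.finite_measure_finite_Union[OF F(1) _ d]) (auto simp: lam_sets sets_cylinder)
  then show ?thesis by (simp add: e lam_measure_cyl)
qed

lemma lam_W:
  assumes W: "W \<subseteq> T n"
  shows "measure lam {\<omega>. word \<omega> 0 n \<in> W} = infsum L W"
proof -
  interpret P: prob_space lam by (rule lam_prob)
  have le: "infsum L V \<le> measure lam {\<omega>. word \<omega> 0 n \<in> V}" if V: "V \<subseteq> T n" for V
  proof (rule infsum_le_finite_sums[OF L_summable_sub[OF V]])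
    fix F assume F: "finite F" "F \<subseteq> V"
    have "sum L F = measure lam {\<omega>. word \<omega> 0 n \<in> F}" using lam_fin[OF F(1)] F(2) V by auto
    also have "\<dots> \<le> measure lam {\<omega>. word \<omega> 0 n \<in> V}"
      by (rule P.finite_measure_mono) (use F(2) in \<open>auto simp: lam_sets\<close>)
    finally show "sum L F \<le> measure lam {\<omega>. word \<omega> 0 n \<in> V}" .
  qed
  have un: "{\<omega>. word \<omega> 0 n \<in> W} \<union> {\<omega>. word \<omega> 0 n \<in> T n - W} = space lam"
    by (auto simp: lam_space)
  have "measure lam ({\<omega>. word \<omega> 0 n \<in> W} \<union> {\<omega>. word \<omega> 0 n \<in> T n - W}) =
      measure lam {\<omega>. word \<omega> 0 n \<in> W} + measure lam {\<omega>. word \<omega> 0 n \<in> T n - W}"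
  proof (rule P.finite_measure_Union)
    show "{\<omega>. word \<omega> 0 n \<in> W} \<in> sets lam" unfolding lam_sets by (rule sets_word_set)
    show "{\<omega>. word \<omega> 0 n \<in> T n - W} \<in> sets lam" unfolding lam_sets by (rule sets_word_set)
  qed auto
  then have tot: "measure lam {\<omega>. word \<omega> 0 n \<in> W} + measure lam {\<omega>. word \<omega> 0 n \<in> T n - W} = 1"
    using un P.prob_space by simp
  have l1: "infsum L W \<le> measure lam {\<omega>. word \<omega> 0 n \<in> W}" by (rule le[OF W])
  have l2: "infsum L (T n - W) \<le> measure lam {\<omega>. word \<omega> 0 n \<in> T n - W}" by (rule le) auto
  show ?thesis using l1 l2 tot infsum_compl[OF W] by linarith
qed

end


lemma meas_seqmap:
  "(\<lambda>\<omega> i. h (\<omega> (g i))) \<in> measurable (seq_space :: (nat \<Rightarrow> 'c) measure) (seq_space :: (nat \<Rightarrow> 'd) measure)"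
  unfolding seq_space_def
proof (rule measurable_PiM_single')
  fix i :: nat
  have "(\<lambda>\<omega>. \<omega> (g i)) \<in> measurable (PiM UNIV (\<lambda>_. count_space (UNIV::'c set))) (count_space UNIV)"
    by (rule measurable_component_singleton) simp
  then show "(\<lambda>\<omega>. h (\<omega> (g i))) \<in> measurable (PiM UNIV (\<lambda>_. count_space (UNIV::'c set))) (count_space (UNIV :: 'd set))"
    by (rule measurable_compose) simp
qed (auto simp: space_PiM)

lemma shift_eq: "shift = (\<lambda>\<omega> i. \<omega> (Suc i))" by (simp add: shift_def fun_eq_iff)

lemma meas_shift: "shift \<in> measurable seq_space seq_space"
  unfolding shift_eq using meas_seqmap[of "\<lambda>x. x" Suc] by simp

lemma word_shift: "word (shift \<omega>) 0 n = word \<omega> (Suc 0) n"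
  by (simp add: word_def shift_def)

lemma map_fst_word: "map fst (word \<omega> i n) = word (\<lambda>i. fst (\<omega> i)) i n" by (simp add: word_def)
lemma map_snd_word: "map snd (word \<omega> i n) = word (\<lambda>i. snd (\<omega> i)) i n" by (simp add: word_def)

context core begin

definition nu :: "(nat \<Rightarrow> bool) measure" where "nu = distr lam seq_space (\<lambda>\<omega> i. snd (\<omega> i))"
definition pr :: "(nat \<Rightarrow> 'a \<times> bool) \<Rightarrow> (nat \<Rightarrow> 'a) \<times> (nat \<Rightarrow> bool)" where
  "pr \<omega> = ((\<lambda>i. fst (\<omega> i)), (\<lambda>i. snd (\<omega> i)))"
definition JJ where "JJ = distr lam (\<mu> \<Otimes>\<^sub>M nu) pr"

lemma nu_sets: "sets nu = sets seq_space" by (simp add: nu_def)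

lemma meas_lam_eq: "measurable lam N = measurable seq_space N"
  by (rule measurable_cong_sets) (simp_all add: lam_sets)

lemma meas_fst_seq: "(\<lambda>\<omega> i. fst (\<omega> i)) \<in> measurable (seq_space :: (nat \<Rightarrow> 'a \<times> bool) measure) seq_space"
  using meas_seqmap[of fst "\<lambda>i. i"] by simp
lemma meas_snd_seq: "(\<lambda>\<omega> i. snd (\<omega> i)) \<in> measurable (seq_space :: (nat \<Rightarrow> 'a \<times> bool) measure) seq_space"
  using meas_seqmap[of snd "\<lambda>i. i"] by simp

lemma meas_fst_mu: "(\<lambda>\<omega> i. fst (\<omega> i)) \<in> measurable lam \<mu>"
  using meas_fst_seq measurable_cong_sets[OF lam_sets mu_sets] by simp
lemma meas_snd_nu: "(\<lambda>\<omega> i. snd (\<omega> i)) \<in> measurable lam nu"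
  using meas_snd_seq measurable_cong_sets[OF lam_sets nu_sets] by simp

lemma pr_meas: "pr \<in> measurable lam (\<mu> \<Otimes>\<^sub>M nu)"
  unfolding pr_def[abs_def] by (rule measurable_Pair[OF meas_fst_mu meas_snd_nu])

lemma pr_meas_seq: "pr \<in> measurable seq_space (\<mu> \<Otimes>\<^sub>M nu)"
  using pr_meas by (simp add: meas_lam_eq)

lemma nu_prob: "prob_space nu"
proof -
  have m: "(\<lambda>\<omega> i. snd (\<omega> i)) \<in> measurable lam seq_space" using meas_snd_seq by (simp add: meas_lam_eq)
  show ?thesis unfolding nu_def by (rule prob_space.prob_space_distr[OF lam_prob m])
qed

lemma lam_inv: "distr lam seq_space shift = lam"
proof (rule seq_measure_eqI)
  interpret P: prob_space lam by (rule lam_prob)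
  have ms: "shift \<in> measurable lam seq_space" using meas_shift by (simp add: meas_lam_eq)
  show "sets (distr lam seq_space shift) = sets seq_space" by simp
  show "sets lam = sets seq_space" by (rule lam_sets)
  show "finite_measure (distr lam seq_space shift)"
    by (rule prob_space.finite_measure[OF P.prob_space_distr[OF ms]])
  fix w :: "('a \<times> bool) list"
  have "shift -` cylinder w \<inter> space lam = {\<omega>. word \<omega> 0 (Suc (length w)) \<in> {b # w |b. True}}"
    by (auto simp: lam_space cylinder_word word_shift word_Suc)
  then have "emeasure (distr lam seq_space shift) (cylinder w) = emeasure lam {\<omega>. word \<omega> 0 (Suc (length w)) \<in> {b # w |b. True}}"
    using emeasure_distr[OF ms sets_cylinder] by simp
  also have "\<dots> = ennreal (measure lam {\<omega>. word \<omega> 0 (Suc (length w)) \<in> {b # w |b. True}})"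
    by (rule P.emeasure_eq_measure)
  also have "measure lam {\<omega>. word \<omega> 0 (Suc (length w)) \<in> {b # w |b. True}} = L w"
  proof -
    have sub: "{b # w |b. True} \<subseteq> T (Suc (length w))" by auto
    show ?thesis using lam_W[OF sub] L_shift[of w] by simp
  qed
  finally show "emeasure (distr lam seq_space shift) (cylinder w) = emeasure lam (cylinder w)"
    by (simp add: lam_cyl)
qed

lemma shift_mu: "shift \<in> measurable \<mu> \<mu>"
  using meas_shift measurable_cong_sets[OF mu_sets mu_sets] by simp
lemma shift_nu: "shift \<in> measurable nu nu"
  using meas_shift measurable_cong_sets[OF nu_sets nu_sets] by simp

lemma JJ_sets: "sets JJ = sets (\<mu> \<Otimes>\<^sub>M nu)" by (simp add: JJ_def)

lemma JJ_shift: "distr JJ (\<mu> \<Otimes>\<^sub>M nu) (map_prod shift shift) = JJ"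
proof -
  have e: "map_prod shift shift = (\<lambda>p. (shift (fst p), shift (snd p)))"
    by (rule ext) (simp add: prod_eq_iff)
  have mps: "map_prod shift shift \<in> measurable (\<mu> \<Otimes>\<^sub>M nu) (\<mu> \<Otimes>\<^sub>M nu)"
    unfolding e
    by (rule measurable_Pair; rule measurable_compose[OF _ shift_mu] measurable_compose[OF _ shift_nu])
       (simp_all add: measurable_fst'' measurable_snd'')
  have ms: "shift \<in> measurable lam seq_space" using meas_shift by (simp add: meas_lam_eq)
  have "distr JJ (\<mu> \<Otimes>\<^sub>M nu) (map_prod shift shift) = distr lam (\<mu> \<Otimes>\<^sub>M nu) (map_prod shift shift \<circ> pr)"
    unfolding JJ_def by (rule distr_distr[OF mps pr_meas])
  also have "map_prod shift shift \<circ> pr = pr \<circ> shift"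
    by (rule ext) (simp add: pr_def shift_def)
  also have "distr lam (\<mu> \<Otimes>\<^sub>M nu) (pr \<circ> shift) = distr (distr lam seq_space shift) (\<mu> \<Otimes>\<^sub>M nu) pr"
    by (rule distr_distr[symmetric, OF pr_meas_seq ms])
  also have "\<dots> = JJ" by (simp add: lam_inv JJ_def)
  finally show ?thesis .
qed

lemma JJ_fst: "distr JJ \<mu> fst = \<mu>"
proof -
  interpret P: prob_space lam by (rule lam_prob)
  interpret M: prob_space \<mu> by (rule mu_prob)
  have "distr JJ \<mu> fst = distr lam \<mu> (fst \<circ> pr)"
    unfolding JJ_def by (rule distr_distr[OF measurable_fst pr_meas])
  also have "fst \<circ> pr = (\<lambda>\<omega> i. fst (\<omega> i))" by (rule ext) (simp add: pr_def)
  also have "distr lam \<mu> (\<lambda>\<omega> i. fst (\<omega> i)) = \<mu>"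
  proof (rule seq_measure_eqI)
    show "sets (distr lam \<mu> (\<lambda>\<omega> i. fst (\<omega> i))) = sets seq_space" by (simp add: mu_sets)
    show "sets \<mu> = sets seq_space" by (rule mu_sets)
    show "finite_measure (distr lam \<mu> (\<lambda>\<omega> i. fst (\<omega> i)))"
      by (rule prob_space.finite_measure[OF P.prob_space_distr[OF meas_fst_mu]])
    fix u :: "'a list"
    have cs: "cylinder u \<in> sets \<mu>" by (simp add: mu_sets sets_cylinder)
    have pre: "(\<lambda>\<omega> i. fst (\<omega> i)) -` cylinder u \<inter> space lam = {\<omega>. word \<omega> 0 (length u) \<in> Fu u}"
      by (auto simp: lam_space cylinder_word Fu_def map_fst_word)
    have "emeasure (distr lam \<mu> (\<lambda>\<omega> i. fst (\<omega> i))) (cylinder u) = emeasure lam {\<omega>. word \<omega> 0 (length u) \<in> Fu u}"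
      using emeasure_distr[OF meas_fst_mu cs] pre by simp
    also have "\<dots> = ennreal (measure lam {\<omega>. word \<omega> 0 (length u) \<in> Fu u})"
      by (rule P.emeasure_eq_measure)
    also have "measure lam {\<omega>. word \<omega> 0 (length u) \<in> Fu u} = measure \<mu> (cylinder u)"
      using lam_W[OF Fu_sub[of u]] infsum_finite[OF Fu_finite[of u], of L] sum_Fu[of u] by simp
    finally show "emeasure (distr lam \<mu> (\<lambda>\<omega> i. fst (\<omega> i))) (cylinder u) = emeasure \<mu> (cylinder u)"
      by (simp add: M.emeasure_eq_measure)
  qed
  finally show ?thesis .
qed

lemma JJ_snd: "distr JJ nu snd = nu"
proof -
  have "distr JJ nu snd = distr lam nu (snd \<circ> pr)"
    unfolding JJ_def by (rule distr_distr[OF measurable_snd pr_meas])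
  also have "snd \<circ> pr = (\<lambda>\<omega> i. snd (\<omega> i))" by (rule ext) (simp add: pr_def)
  also have "distr lam nu (\<lambda>\<omega> i. snd (\<omega> i)) = nu"
    unfolding nu_def[of] by (rule distr_cong) (simp_all add: nu_def[symmetric] nu_sets)
  finally show ?thesis .
qed


end


lemma topspace_cantor[simp]: "topspace cantor_top = UNIV"
  by (auto simp: cantor_top_def PiE_iff)

lemma nbhd_cont:
  assumes f: "continuous_map cantor_top euclideanreal f" and e: "0 < e"
  shows "\<exists>n. \<forall>a. (\<forall>j<n. a j = c j) \<longrightarrow> \<bar>f a - f c\<bar> < e"
proof -
  define Ob where "Ob = {x \<in> topspace cantor_top. f x \<in> ball (f c) e}"
  have "openin cantor_top Ob" unfolding Ob_def
    by (rule openin_continuous_map_preimage[OF f]) simp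
  then have op: "openin (product_topology (\<lambda>_. discrete_topology UNIV) UNIV) Ob"
    by (simp add: cantor_top_def)
  have cO: "c \<in> Ob" using e by (simp add: Ob_def)
  have "\<exists>U. finite {i \<in> UNIV. U i \<noteq> topspace (discrete_topology UNIV)} \<and>
     (\<forall>i \<in> UNIV. openin (discrete_topology UNIV) (U i)) \<and> c \<in> Pi\<^sub>E UNIV U \<and> Pi\<^sub>E UNIV U \<subseteq> Ob"
    by (rule bspec[OF op[unfolded openin_product_topology_alt] cO])
  then obtain U where U: "finite {i \<in> UNIV. U i \<noteq> topspace (discrete_topology UNIV)}"
     "c \<in> Pi\<^sub>E UNIV U" "Pi\<^sub>E UNIV U \<subseteq> Ob"
    by (elim exE conjE) simp
  have "finite {i. U i \<noteq> UNIV}" using U(1) by simp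
  then obtain n where n: "{i. U i \<noteq> UNIV} \<subseteq> {..<n}" using finite_nat_bounded by blast
  show ?thesis
  proof (intro exI allI impI)
    fix a assume a: "\<forall>j<n. a j = c j"
    have "a \<in> Pi\<^sub>E UNIV U"
    proof -
      have "a i \<in> U i" for i
      proof (cases "i < n")
        case True then show ?thesis using a U(2) by (auto simp: PiE_iff)
      next
        case False then have "U i = UNIV" using n by auto
        then show ?thesis by simp
      qed
      then show ?thesis by (auto simp: PiE_iff)
    qed
    then have "a \<in> Ob" using U(3) by blast
    then show "\<bar>f a - f c\<bar> < e" by (simp add: Ob_def dist_real_def abs_minus_commute)
  qed
qed

lemma cyl_open: "openin cantor_top {a. \<forall>j<n. a j = c j}"
proof -
  define U where "U = (\<lambda>j. if j < n then {c j} else (UNIV::bool set))"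
  have fin: "finite {i \<in> UNIV. U i \<noteq> topspace (discrete_topology UNIV)}"
    by (rule finite_subset[of _ "{..<n}"]) (auto simp: U_def)
  have sub: "Pi\<^sub>E UNIV U \<subseteq> {a. \<forall>j<n. a j = c j}"
  proof
    fix x assume "x \<in> Pi\<^sub>E UNIV U"
    then have xj: "x j \<in> U j" for j by (auto simp: PiE_iff)
    have "x j = c j" if "j < n" for j using xj[of j] that by (simp add: U_def)
    then show "x \<in> {a. \<forall>j<n. a j = c j}" by simp
  qed
  have mem: "x \<in> Pi\<^sub>E UNIV U" if "x \<in> {a. \<forall>j<n. a j = c j}" for x using that by (auto simp: PiE_iff U_def)
  have "\<forall>x\<in>{a. \<forall>j<n. a j = c j}. \<exists>U. finite {i \<in> UNIV. U i \<noteq> topspace (discrete_topology UNIV)} \<and>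
                 (\<forall>i \<in> UNIV. openin (discrete_topology UNIV) (U i)) \<and> x \<in> Pi\<^sub>E UNIV U \<and> Pi\<^sub>E UNIV U \<subseteq> {a. \<forall>j<n. a j = c j}"
  proof (rule ballI)
    fix x assume x: "x \<in> {a. \<forall>j<n. a j = c j}"
    show "\<exists>U. finite {i \<in> UNIV. U i \<noteq> topspace (discrete_topology UNIV)} \<and>
                 (\<forall>i \<in> UNIV. openin (discrete_topology UNIV) (U i)) \<and> x \<in> Pi\<^sub>E UNIV U \<and> Pi\<^sub>E UNIV U \<subseteq> {a. \<forall>j<n. a j = c j}"
      using fin sub mem[OF x] by (intro exI[of _ U]) simp
  qed
  then show ?thesis unfolding cantor_top_def openin_product_topology_alt by simp
qed

lemma compact_cantor: "compact_space cantor_top"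
  unfolding cantor_top_def compact_space_product_topology by (simp add: compact_space_discrete_topology)

lemma unif_cont:
  assumes f: "continuous_map cantor_top euclideanreal f" and e: "0 < e"
  shows "\<exists>N. \<forall>a b. (\<forall>j<N. a j = b j) \<longrightarrow> \<bar>f a - f b\<bar> < e"
proof -
  define B where "B c n = {a. \<forall>j<n. a j = c j}" for c :: "nat \<Rightarrow> bool" and n
  have "\<forall>c. \<exists>n. \<forall>a. (\<forall>j<n. a j = c j) \<longrightarrow> \<bar>f a - f c\<bar> < e/2"
    by (intro allI nbhd_cont[OF f]) (use e in simp)
  from choice[OF this] obtain nf where nf: "\<And>c a. (\<forall>j<nf c. a j = c j) \<Longrightarrow> \<bar>f a - f c\<bar> < e/2"
    by blast
  have "compactin cantor_top (topspace cantor_top)" using compact_cantor by (simp add: compact_space_def)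
  then have cov: "\<And>\<U>. (\<forall>U \<in> \<U>. openin cantor_top U) \<and> UNIV \<subseteq> \<Union>\<U> \<Longrightarrow> (\<exists>\<F>. finite \<F> \<and> \<F> \<subseteq> \<U> \<and> UNIV \<subseteq> \<Union>\<F>)"
    unfolding compactin_def by simp
  have "(\<forall>U \<in> range (\<lambda>c. B c (nf c)). openin cantor_top U) \<and> UNIV \<subseteq> \<Union>(range (\<lambda>c. B c (nf c)))"
  proof (intro conjI ballI subsetI)
    fix U assume "U \<in> range (\<lambda>c. B c (nf c))"
    then obtain c where "U = B c (nf c)" by blast
    then show "openin cantor_top U" by (simp add: B_def cyl_open)
  next
    fix x :: "nat \<Rightarrow> bool"
    have "x \<in> B x (nf x)" by (simp add: B_def)
    then show "x \<in> \<Union>(range (\<lambda>c. B c (nf c)))" by blast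
  qed
  from cov[OF this] obtain F where F: "finite F" "F \<subseteq> range (\<lambda>c. B c (nf c))" "UNIV \<subseteq> \<Union>F"
    by (elim exE conjE) simp
  obtain C where C: "C \<subseteq> UNIV" "finite C" "F = (\<lambda>c. B c (nf c)) ` C"
    using finite_subset_image[OF F(1) F(2)] by blast
  have Cne: "C \<noteq> {}" using F(3) C(3) by auto
  define N where "N = Max (nf ` C)"
  show ?thesis
  proof (intro exI allI impI)
    fix a b :: "nat \<Rightarrow> bool" assume ab: "\<forall>j<N. a j = b j"
    obtain c where c: "c \<in> C" "a \<in> B c (nf c)" using F(3) C(3) by blast
    have "nf c \<le> N" unfolding N_def using C(2) c(1) by simp
    then have "\<forall>j<nf c. b j = c j" using c(2) ab by (auto simp: B_def)
    then have "\<bar>f b - f c\<bar> < e/2" by (rule nf)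
    moreover have "\<bar>f a - f c\<bar> < e/2" using c(2) nf by (simp add: B_def)
    ultimately show "\<bar>f a - f b\<bar> < e" by linarith
  qed
qed

lemma approx_cont:
  assumes f: "continuous_map cantor_top euclideanreal f" and e: "0 < e"
  shows "\<exists>N h. \<forall>a. \<bar>f a - h (word a 0 N)\<bar> < e"
proof -
  obtain N where N: "\<And>a b. (\<forall>j<N. a j = b j) \<Longrightarrow> \<bar>f a - f b\<bar> < e" using unif_cont[OF f e] by blast
  define h where "h v = f (\<lambda>j. if j < N then v ! j else False)" for v :: "bool list"
  have "\<bar>f a - h (word a 0 N)\<bar> < e" for a unfolding h_def by (rule N) simp
  then show ?thesis by blast
qed

lemma finite_TB: "finite {v :: bool list. length v = N}"
proof -
  have "finite {v :: bool list. set v \<subseteq> UNIV \<and> length v = N}" by (rule finite_lists_length_eq) simp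
  then show ?thesis by simp
qed

lemma sum_word:
  fixes h :: "bool list \<Rightarrow> real" and \<omega> :: "nat \<Rightarrow> bool"
  shows "(\<Sum>i<m. h (word \<omega> i N)) = (\<Sum>v\<in>{v. length v = N}. h v * real (cnt \<omega> {v} N m))"
proof -
  have d: "(\<Sum>v\<in>{v. length v = N}. if word \<omega> i N = v then h v else 0) = h (word \<omega> i N)" for i
    by (subst sum.delta'[OF finite_TB]) simp
  have "(\<Sum>i<m. h (word \<omega> i N)) = (\<Sum>i<m. \<Sum>v\<in>{v. length v = N}. if word \<omega> i N = v then h v else 0)"
    by (simp only: d)
  also have "\<dots> = (\<Sum>v\<in>{v. length v = N}. \<Sum>i<m. if word \<omega> i N = v then h v else 0)"
    by (rule sum.swap)
  also have "\<dots> = (\<Sum>v\<in>{v. length v = N}. h v * real (cnt \<omega> {v} N m))"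
  proof (rule sum.cong[OF refl])
    fix v :: "bool list"
    have "(\<Sum>i<m. if word \<omega> i N = v then h v else 0) = (\<Sum>i\<in>{i\<in>{..<m}. word \<omega> i N = v}. h v)"
      by (rule sum.inter_filter[symmetric]) simp
    also have "\<dots> = real (card {i\<in>{..<m}. word \<omega> i N = v}) * h v" by simp
    also have "{i\<in>{..<m}. word \<omega> i N = v} = {i. i < m \<and> word \<omega> i N \<in> {v}}" by auto
    finally show "(\<Sum>i<m. if word \<omega> i N = v then h v else 0) = h v * real (cnt \<omega> {v} N m)"
      by (simp add: cnt_def mult.commute)
  qed
  finally show ?thesis .
qed

lemma cylfun_int:
  fixes M :: "(nat \<Rightarrow> bool) measure" and h :: "bool list \<Rightarrow> real"
  assumes P: "prob_space M" and sM: "sets M = sets seq_space"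
  shows "integrable M (\<lambda>\<omega>. h (word \<omega> 0 N))"
    and "integral\<^sup>L M (\<lambda>\<omega>. h (word \<omega> 0 N)) = (\<Sum>v\<in>{v. length v = N}. h v * measure M (cylinder v))"
proof -
  interpret prob_space M by fact
  have spM: "space M = UNIV" using sets_eq_imp_space_eq[OF sM] by simp
  have eq: "(\<lambda>\<omega>. h (word \<omega> 0 N)) = (\<lambda>\<omega>. \<Sum>v\<in>{v. length v = N}. h v * indicator (cylinder v) \<omega>)"
  proof
    fix \<omega> :: "nat \<Rightarrow> bool"
    have "(\<Sum>v\<in>{v. length v = N}. h v * indicator (cylinder v) \<omega>) = (\<Sum>v\<in>{v. length v = N}. if word \<omega> 0 N = v then h v else 0)"
      by (rule sum.cong[OF refl]) (auto simp: cylinder_word indicator_def)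
    also have "\<dots> = h (word \<omega> 0 N)" by (subst sum.delta'[OF finite_TB]) simp
    finally show "h (word \<omega> 0 N) = (\<Sum>v\<in>{v. length v = N}. h v * indicator (cylinder v) \<omega>)" by simp
  qed
  have ii: "integrable M (\<lambda>\<omega>. h v * indicator (cylinder v) \<omega>)" for v
  proof -
    have "emeasure M (cylinder v) < \<infinity>" using emeasure_finite[of "cylinder v"] by (simp add: less_top[symmetric])
    then have "integrable M (indicator (cylinder v) :: _ \<Rightarrow> real)"
      by (intro integrable_real_indicator) (simp_all add: sM sets_cylinder)
    then show ?thesis by (rule integrable_mult_right)
  qed
  have mw: "(\<lambda>\<omega>. word \<omega> 0 N) \<in> measurable M (count_space UNIV)"
    by (simp add: measurable_cong_sets[OF sM refl] measurable_word)
  have mh: "(\<lambda>\<omega>. h (word \<omega> 0 N)) \<in> borel_measurable M" by (rule measurable_compose[OF mw]) simp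
  have bd: "\<bar>h (word \<omega> 0 N)\<bar> \<le> (\<Sum>v\<in>{v. length v = N}. \<bar>h v\<bar>)" for \<omega>
    by (rule member_le_sum[OF _ _ finite_TB]) auto
  show "integrable M (\<lambda>\<omega>. h (word \<omega> 0 N))"
    by (intro integrable_const_bound[where B="\<Sum>v\<in>{v. length v = N}. \<bar>h v\<bar>"] AE_I2 mh) (simp add: bd)
  have "integral\<^sup>L M (\<lambda>\<omega>. \<Sum>v\<in>{v. length v = N}. h v * indicator (cylinder v) \<omega>) =
      (\<Sum>v\<in>{v. length v = N}. integral\<^sup>L M (\<lambda>\<omega>. h v * indicator (cylinder v) \<omega>))"
    by (rule Bochner_Integration.integral_sum) (rule ii)
  also have "\<dots> = (\<Sum>v\<in>{v. length v = N}. h v * measure M (cylinder v))"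
    by (simp add: spM)
  finally show "integral\<^sup>L M (\<lambda>\<omega>. h (word \<omega> 0 N)) = (\<Sum>v\<in>{v. length v = N}. h v * measure M (cylinder v))"
    unfolding eq .
qed

lemma shift_pow: "(shift ^^ i) \<omega> = (\<lambda>n. \<omega> (n + i))"
  by (induction i) (simp_all add: shift_def)

lemma word_shift_pow: "word ((shift ^^ i) \<omega>) 0 N = word \<omega> i N"
  by (simp add: word_def shift_pow add.commute)

context core begin

lemma nu_prob': "prob_space nu" by (rule nu_prob)

lemma nu_cyl_lim:
  assumes lv: "length v = N"
  shows "(\<lambda>k. frq y {v} N (R k)) \<longlonglongrightarrow> measure nu (cylinder v)"
proof -
  interpret P: prob_space lam by (rule lam_prob)
  define W :: "('a \<times> bool) list set" where "W = {w. length w = N \<and> map snd w = v}"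
  have WT: "W \<subseteq> T N" by (auto simp: W_def)
  have l: "(\<lambda>k. frq z W N (R k)) \<longlonglongrightarrow> infsum L W" by (rule KL[OF WT])
  have e1: "frq z W N m = frq y {v} N m" for m
    unfolding frq_def cnt_def W_def by (simp add: map_snd_word_zz)
  have m: "(\<lambda>\<omega> i. snd (\<omega> i)) \<in> measurable lam seq_space" using meas_snd_seq by (simp add: meas_lam_eq)
  have pre: "(\<lambda>\<omega> i. snd (\<omega> i)) -` cylinder v \<inter> space lam = {\<omega>. word \<omega> 0 N \<in> W}"
    using lv by (auto simp: lam_space cylinder_word W_def map_snd_word)
  have "measure nu (cylinder v) = measure lam {\<omega>. word \<omega> 0 N \<in> W}"
    unfolding nu_def using measure_distr[OF m sets_cylinder[of v]] pre by simp
  also have "\<dots> = infsum L W" by (rule lam_W[OF WT])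
  finally show ?thesis using l e1 by simp
qed

lemma avg_cylfun:
  fixes h :: "bool list \<Rightarrow> real"
  shows "(\<lambda>k. (\<Sum>i<R k. h (word ((shift ^^ i) y) 0 N)) / real (R k)) \<longlonglongrightarrow> integral\<^sup>L nu (\<lambda>\<omega>. h (word \<omega> 0 N))"
proof -
  have e: "(\<Sum>i<m. h (word ((shift ^^ i) y) 0 N)) / real m = (\<Sum>v\<in>{v. length v = N}. h v * frq y {v} N m)" for m
    by (simp add: word_shift_pow sum_word sum_divide_distrib frq_def)
  have "(\<lambda>k. \<Sum>v\<in>{v. length v = N}. h v * frq y {v} N (R k)) \<longlonglongrightarrow> (\<Sum>v\<in>{v. length v = N}. h v * measure nu (cylinder v))"
    by (intro tendsto_sum tendsto_mult_left nu_cyl_lim) simp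
  then show ?thesis unfolding e cylfun_int(2)[OF nu_prob nu_sets] .
qed

lemma nu_derived': "derived_measure S nu"
  unfolding derived_measure_def
proof (intro conjI exI[of _ R] allI impI)
  show "prob_space nu" by (rule nu_prob)
  show "sets nu = sets seq_space" by (rule nu_sets)
  show "strict_mono R" by (rule R)
  interpret N: prob_space nu by (rule nu_prob)
  have spN: "space nu = UNIV" using sets_eq_imp_space_eq[OF nu_sets] by simp
  fix f assume f: "continuous_map cantor_top euclideanreal f"
  have mw: "(\<lambda>\<omega>. word \<omega> 0 n) \<in> measurable nu (count_space UNIV)" for n
    by (simp add: measurable_cong_sets[OF nu_sets refl] measurable_word)
  have mh: "(\<lambda>\<omega>. h (word \<omega> 0 n)) \<in> borel_measurable nu" for h :: "bool list \<Rightarrow> real" and n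
    by (rule measurable_compose[OF mw]) simp
  have ex: "\<forall>k. \<exists>N h. \<forall>a. \<bar>f a - h (word a 0 N)\<bar> < inverse (real (Suc k))"
    by (intro allI approx_cont[OF f]) simp
  from choice[OF ex] obtain Nk where "\<forall>k. \<exists>h. \<forall>a. \<bar>f a - h (word a 0 (Nk k))\<bar> < inverse (real (Suc k))"
    by blast
  from choice[OF this] obtain hk where Nk: "\<forall>k a. \<bar>f a - hk k (word a 0 (Nk k))\<bar> < inverse (real (Suc k))"
    by blast
  have fmeas: "f \<in> borel_measurable nu"
  proof (rule borel_measurable_LIMSEQ_real[of _ "\<lambda>k a. hk k (word a 0 (Nk k))"])
    fix a :: "nat \<Rightarrow> bool"
    have "(\<lambda>k. hk k (word a 0 (Nk k)) - f a) \<longlonglongrightarrow> 0"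
    proof (rule Lim_null_comparison)
      show "eventually (\<lambda>k. norm (hk k (word a 0 (Nk k)) - f a) \<le> inverse (real (Suc k))) sequentially"
      proof (intro always_eventually allI)
        fix k
        show "norm (hk k (word a 0 (Nk k)) - f a) \<le> inverse (real (Suc k))"
        proof -
          have "\<bar>f a - hk k (word a 0 (Nk k))\<bar> < inverse (real (Suc k))" using Nk by blast
          then show ?thesis by (simp add: abs_minus_commute)
        qed
      qed
      show "(\<lambda>k. inverse (real (Suc k))) \<longlonglongrightarrow> 0" by (rule LIMSEQ_inverse_real_of_nat)
    qed
    then have "(\<lambda>k. hk k (word a 0 (Nk k)) - f a + f a) \<longlonglongrightarrow> 0 + f a" by (intro tendsto_add) simp_all
    then show "(\<lambda>k. hk k (word a 0 (Nk k))) \<longlonglongrightarrow> f a" by simp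
  qed (rule mh)
  have fint: "integrable nu f"
  proof -
    obtain N1 h1 where h1: "\<And>a. \<bar>f a - h1 (word a 0 N1)\<bar> < 1" using approx_cont[OF f, of 1] by auto
    define B where "B = (\<Sum>v\<in>{v. length v = N1}. \<bar>h1 v\<bar>) + 1"
    have "\<bar>f a\<bar> \<le> B" for a
    proof -
      have "\<bar>h1 (word a 0 N1)\<bar> \<le> (\<Sum>v\<in>{v. length v = N1}. \<bar>h1 v\<bar>)"
        by (rule member_le_sum[OF _ _ finite_TB]) auto
      then show ?thesis using h1[of a] unfolding B_def by linarith
    qed
    then show ?thesis by (intro N.integrable_const_bound[where B=B] AE_I2 fmeas) simp
  qed
  show "(\<lambda>k. (\<Sum>i<R k. f ((shift ^^ i) (\<lambda>n. n \<in> S))) / real (R k)) \<longlonglongrightarrow> integral\<^sup>L nu f"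
  proof (rule tendstoI)
    fix \<epsilon> :: real assume \<epsilon>: "0 < \<epsilon>"
    obtain N h where h: "\<And>a. \<bar>f a - h (word a 0 N)\<bar> < \<epsilon>/4"
      using approx_cont[OF f, of "\<epsilon>/4"] \<epsilon> by auto
    define g where "g a = h (word a 0 N)" for a
    have gint: "integrable nu g" unfolding g_def by (rule cylfun_int(1)[OF nu_prob nu_sets])
    have lim: "(\<lambda>k. (\<Sum>i<R k. g ((shift ^^ i) y)) / real (R k)) \<longlonglongrightarrow> integral\<^sup>L nu g"
      unfolding g_def by (rule avg_cylfun)
    have ev: "eventually (\<lambda>k. dist ((\<Sum>i<R k. g ((shift ^^ i) y)) / real (R k)) (integral\<^sup>L nu g) < \<epsilon>/4) sequentially"
      by (rule tendstoD[OF lim]) (use \<epsilon> in simp)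
    have gint2: "integrable nu (\<lambda>a. g a + \<epsilon>/4)" by (rule Bochner_Integration.integrable_add[OF gint N.integrable_const])
    have gint3: "integrable nu (\<lambda>a. g a - \<epsilon>/4)" by (rule Bochner_Integration.integrable_diff[OF gint N.integrable_const])
    have pw1: "f a \<le> g a + \<epsilon>/4" for a using h[of a] unfolding g_def abs_less_iff by linarith
    have pw2: "g a - \<epsilon>/4 \<le> f a" for a using h[of a] unfolding g_def abs_less_iff by linarith
    have c1: "integral\<^sup>L nu (\<lambda>a. g a + \<epsilon>/4) = integral\<^sup>L nu g + \<epsilon>/4"
      using Bochner_Integration.integral_add[OF gint N.integrable_const[of "\<epsilon>/4"]] N.prob_space by simp
    have c2: "integral\<^sup>L nu (\<lambda>a. g a - \<epsilon>/4) = integral\<^sup>L nu g - \<epsilon>/4"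
      using Bochner_Integration.integral_diff[OF gint N.integrable_const[of "\<epsilon>/4"]] N.prob_space by simp
    have I1: "integral\<^sup>L nu f \<le> integral\<^sup>L nu g + \<epsilon>/4"
      using Bochner_Integration.integral_mono[OF fint gint2 pw1] c1 by simp
    have I2: "integral\<^sup>L nu g - \<epsilon>/4 \<le> integral\<^sup>L nu f"
      using Bochner_Integration.integral_mono[OF gint3 fint pw2] c2 by simp
    show "eventually (\<lambda>k. dist ((\<Sum>i<R k. f ((shift ^^ i) (\<lambda>n. n \<in> S))) / real (R k)) (integral\<^sup>L nu f) < \<epsilon>) sequentially"
      using ev evR
    proof eventually_elim
      case (elim k)
      define m where "m = R k"
      have m: "0 < m" using elim(2) by (simp add: m_def)
      have "\<bar>(\<Sum>i<m. f ((shift ^^ i) y)) - (\<Sum>i<m. g ((shift ^^ i) y))\<bar> \<le> real m * (\<epsilon>/4)"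
      proof -
        have "\<bar>(\<Sum>i<m. f ((shift ^^ i) y)) - (\<Sum>i<m. g ((shift ^^ i) y))\<bar> = \<bar>\<Sum>i<m. f ((shift ^^ i) y) - g ((shift ^^ i) y)\<bar>"
          by (simp add: sum_subtractf)
        also have "\<dots> \<le> (\<Sum>i<m. \<bar>f ((shift ^^ i) y) - g ((shift ^^ i) y)\<bar>)" by (rule sum_abs)
        also have "\<dots> \<le> real (card {..<m}) * (\<epsilon>/4)"
          by (rule sum_bounded_above) (use h in \<open>simp add: g_def less_imp_le\<close>)
        finally show ?thesis by simp
      qed
      then have A: "\<bar>(\<Sum>i<m. f ((shift ^^ i) y)) / real m - (\<Sum>i<m. g ((shift ^^ i) y)) / real m\<bar> \<le> \<epsilon>/4"
        using m by (simp add: diff_divide_distrib[symmetric] abs_divide pos_divide_le_eq mult.commute)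
      have B: "\<bar>(\<Sum>i<m. g ((shift ^^ i) y)) / real m - integral\<^sup>L nu g\<bar> < \<epsilon>/4"
        using elim(1) by (simp add: m_def dist_real_def)
      show ?case unfolding dist_real_def m_def[symmetric] using A B I1 I2 by linarith
    qed
  qed
qed

end

context core begin

abbreviation Wv :: "('a \<times> bool) list set" where "Wv \<equiv> {w. length w = 1 \<and> map snd w = [True]}"

lemma core_eq:
  assumes H: "\<And>\<nu>. derived_measure S \<nu> \<Longrightarrow> disjoint_measures \<mu> \<nu>"
  shows "L [(a, True)] = measure \<mu> (cylinder [a]) * infsum L Wv"
proof -
  interpret P: prob_space lam by (rule lam_prob)
  interpret M: prob_space \<mu> by (rule mu_prob)
  interpret N: prob_space nu by (rule nu_prob)
  have "JJ = \<mu> \<Otimes>\<^sub>M nu"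
    using H[OF nu_derived'] JJ_sets JJ_shift JJ_fst JJ_snd unfolding disjoint_measures_def by blast
  have cA: "cylinder [a] \<in> sets \<mu>" by (simp add: mu_sets sets_cylinder)
  have cB: "cylinder [True] \<in> sets nu" by (simp add: nu_sets sets_cylinder)
  have AB: "cylinder [a] \<times> cylinder [True] \<in> sets (\<mu> \<Otimes>\<^sub>M nu)" using cA cB by simp
  have pre: "pr -` (cylinder [a] \<times> cylinder [True]) \<inter> space lam = cylinder [(a, True)]"
    by (auto simp: pr_def cylinder_def lam_space prod_eq_iff)
  have "emeasure JJ (cylinder [a] \<times> cylinder [True]) = emeasure lam (cylinder [(a, True)])"
    unfolding JJ_def using emeasure_distr[OF pr_meas AB] pre by simp
  also have "\<dots> = ennreal (L [(a, True)])" by (rule lam_cyl)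
  finally have e1: "emeasure JJ (cylinder [a] \<times> cylinder [True]) = ennreal (L [(a, True)])" .
  have "emeasure JJ (cylinder [a] \<times> cylinder [True]) = emeasure \<mu> (cylinder [a]) * emeasure nu (cylinder [True])"
    using \<open>JJ = \<mu> \<Otimes>\<^sub>M nu\<close> N.emeasure_pair_measure_Times[OF cA cB] by simp
  also have "emeasure nu (cylinder [True]) = emeasure lam {\<omega>. word \<omega> 0 1 \<in> Wv}"
  proof -
    have "(\<lambda>\<omega> i. snd (\<omega> i)) -` cylinder [True] \<inter> space lam = {\<omega>. word \<omega> 0 1 \<in> Wv}"
      by (auto simp: lam_space cylinder_word map_snd_word)
    moreover have m: "(\<lambda>\<omega> i. snd (\<omega> i)) \<in> measurable lam seq_space" using meas_snd_seq by (simp add: meas_lam_eq)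
    ultimately show ?thesis unfolding nu_def using emeasure_distr[OF m sets_cylinder[of "[True]"]] by simp
  qed
  also have "\<dots> = ennreal (infsum L Wv)"
  proof -
    have sub: "Wv \<subseteq> T 1" by auto
    show ?thesis using P.emeasure_eq_measure lam_W[OF sub] by simp
  qed
  finally have e2: "emeasure JJ (cylinder [a] \<times> cylinder [True]) = ennreal (measure \<mu> (cylinder [a]) * infsum L Wv)"
    by (simp add: M.emeasure_eq_measure ennreal_mult'' infsum_nonneg L_nonneg)
  have "ennreal (L [(a, True)]) = ennreal (measure \<mu> (cylinder [a]) * infsum L Wv)" using e1 e2 by simp
  then show ?thesis using L_nonneg by (simp add: infsum_nonneg L_nonneg)
qed

end



lemma strict_mono_enum: "infinite (S::nat set) \<Longrightarrow> strict_mono (enumerate S)"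
  by (intro strict_monoI enumerate_mono)

lemma infinite_of_ld:
  assumes "lower_density S > 0" shows "infinite S"
proof
  assume fin: "finite S"
  have "(\<lambda>n. real (card (S \<inter> {..<n})) / real n) \<longlonglongrightarrow> 0"
  proof (rule Lim_null_comparison)
    show "eventually (\<lambda>n. norm (real (card (S \<inter> {..<n})) / real n) \<le> real (card S) * (1 / real n)) sequentially"
    proof (intro always_eventually allI)
      fix n
      have "card (S \<inter> {..<n}) \<le> card S" by (rule card_mono[OF fin]) auto
      then show "norm (real (card (S \<inter> {..<n})) / real n) \<le> real (card S) * (1 / real n)"
        by (simp add: divide_right_mono)
    qed
    show "(\<lambda>n. real (card S) * (1 / real n)) \<longlonglongrightarrow> 0"
      by (rule tendsto_mult_right_zero[OF lim_1_over_n])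
  qed
  from tendsto_ereal[OF this] have "(\<lambda>n. ereal (real (card (S \<inter> {..<n})) / real n)) \<longlonglongrightarrow> 0"
    by (simp add: zero_ereal_def)
  then have "lower_density S = 0" unfolding lower_density_def
    by (subst lim_imp_Liminf) simp_all
  with assms show False by simp
qed

lemma cnt_z1:
  fixes x :: "nat \<Rightarrow> 'a"
  shows "cnt (zz x y) {[(a, True)]} 1 m = card {i. i < m \<and> y i \<and> x i = a}"
  unfolding cnt_def by (rule arg_cong[where f=card]) (auto simp: word_def zz_def)

lemma cnt_y1: "cnt y {[True]} 1 m = card {i. i < m \<and> y i}"
  unfolding cnt_def by (rule arg_cong[where f=card]) (auto simp: word_def)

lemma card_enum:
  fixes S :: "nat set"
  assumes inf: "infinite S"
  shows "card {k. k < n \<and> P (enumerate S k)} = card {i. i < enumerate S n \<and> i \<in> S \<and> P i}"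
proof -
  define s where "s = enumerate S"
  have sm: "strict_mono s" unfolding s_def by (rule strict_mono_enum[OF inf])
  have "s ` {k. k < n \<and> P (s k)} = {i. i < s n \<and> i \<in> S \<and> P i}"
  proof (intro equalityI subsetI)
    fix i assume "i \<in> s ` {k. k < n \<and> P (s k)}"
    then obtain k where k: "k < n" "P (s k)" "i = s k" by blast
    then show "i \<in> {i. i < s n \<and> i \<in> S \<and> P i}"
      using strict_monoD[OF sm k(1)] enumerate_in_set[OF inf, of k] by (simp add: s_def)
  next
    fix i assume i: "i \<in> {i. i < s n \<and> i \<in> S \<and> P i}"
    then obtain k where k: "s k = i" using enumerate_Ex[OF inf] by (auto simp: s_def)
    have "k < n" using i k strict_mono_less[OF sm, of k n] by simp
    then show "i \<in> s ` {k. k < n \<and> P (s k)}" using i k by blast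
  qed
  moreover have "inj_on s {k. k < n \<and> P (s k)}" using strict_mono_imp_inj_on[OF sm] inj_on_subset by blast
  ultimately show ?thesis unfolding s_def by (metis card_image)
qed

theorem mainTheorem7:
  fixes \<mu> :: "(nat \<Rightarrow> 'a::countable) measure" and S :: "nat set"
  assumes "shift_invariant_prob \<mu>"
    and "lower_density S > 0"
    and "\<And>\<nu>. derived_measure S \<nu> \<Longrightarrow> disjoint_measures \<mu> \<nu>"
  shows "\<forall>x a. normal \<mu> x \<longrightarrow>
    (\<lambda>n. real (card {k. k < n \<and> restrict_seq x S k = a}) / real n)
      \<longlonglongrightarrow> measure \<mu> (cylinder [a])"
proof (intro allI impI)
  note mu = assms(1) and ld = assms(2) and H = assms(3)
  fix x :: "nat \<Rightarrow> 'a" and a :: 'a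
  assume nx: "normal \<mu> x"
  have inf: "infinite S" by (rule infinite_of_ld[OF ld])
  define s where "s = enumerate S"
  have sm: "strict_mono s" unfolding s_def by (rule strict_mono_enum[OF inf])
  define y where "y = (\<lambda>n::nat. n \<in> S)"
  define z where "z = zz x y"
  define c where "c n = real (card {k. k < n \<and> restrict_seq x S k = a}) / real n" for n
  define m where "m = measure \<mu> (cylinder [a])"
  have c_eq: "c n = frq z {[(a, True)]} 1 (s n) / frq y {[True]} 1 (s n)" for n
  proof -
    have A1: "card {k. k < n \<and> restrict_seq x S k = a} = card {i. i < s n \<and> i \<in> S \<and> x i = a}"
      unfolding restrict_seq_def s_def by (rule card_enum[OF inf, where P="\<lambda>i. x i = a"])
    have A2: "cnt z {[(a, True)]} 1 (s n) = card {i. i < s n \<and> i \<in> S \<and> x i = a}"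
      unfolding z_def cnt_z1 y_def by (rule arg_cong[where f=card]) auto
    have A: "card {k. k < n \<and> restrict_seq x S k = a} = cnt z {[(a, True)]} 1 (s n)"
      using A1 A2 by simp
    have B: "n = cnt y {[True]} 1 (s n)"
    proof -
      have "card {k. k < n \<and> True} = card {i. i < s n \<and> i \<in> S \<and> True}"
        unfolding s_def by (rule card_enum[OF inf])
      then show ?thesis unfolding cnt_y1 y_def by simp
    qed
    show ?thesis
    proof (cases "s n = 0")
      case True
      then have "n = 0" using B by (simp add: cnt_def)
      then show ?thesis using True B by (simp add: c_def frq_def)
    next
      case False
      then show ?thesis unfolding c_def frq_def A using B[symmetric] by simp
    qed
  qed
  show "(\<lambda>n. real (card {k. k < n \<and> restrict_seq x S k = a}) / real n) \<longlonglongrightarrow> measure \<mu> (cylinder [a])"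
  proof (rule ccontr)
    assume nl: "\<not> ?thesis"
    then have "\<not> (c \<longlonglongrightarrow> m)" by (simp add: c_def[abs_def] m_def)
    then obtain e where e: "0 < e" "\<not> eventually (\<lambda>n. dist (c n) m < e) sequentially"
      unfolding tendsto_iff by blast
    define Q where "Q = {n. \<not> dist (c n) m < e}"
    have infQ: "infinite Q"
      unfolding infinite_nat_iff_unbounded_le Q_def using e(2) by (auto simp: eventually_sequentially not_le)
    define N' where "N' = enumerate Q"
    have N'm: "strict_mono N'" unfolding N'_def by (rule strict_mono_enum[OF infQ])
    have N'Q: "N' k \<in> Q" for k unfolding N'_def by (rule enumerate_in_set[OF infQ])
    define M where "M k = s (N' k)" for k
    have Mm: "strict_mono M" unfolding M_def using strict_mono_o[OF sm N'm] by (simp add: o_def)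
    define g where "g j k = frq z {from_nat j :: ('a \<times> bool) list} (length (from_nat j :: ('a \<times> bool) list)) (M k)" for j k
    have "\<bar>g j k\<bar> \<le> 1" for j k
    proof -
      have "0 \<le> g j k" "g j k \<le> 1" unfolding g_def by (rule frq_nonneg, rule frq_le1)
      then show ?thesis by simp
    qed
    then obtain r where r: "strict_mono r" "\<And>j. convergent (\<lambda>k. g j (r k))" using diag_conv by blast
    define R where "R k = M (r k)" for k
    have Rm: "strict_mono R" unfolding R_def using strict_mono_o[OF Mm r(1)] by (simp add: o_def)
    have conv: "convergent (\<lambda>k. frq (zz x (\<lambda>n. n \<in> S)) {w} (length w) (R k))" for w :: "('a \<times> bool) list"
      using r(2)[of "to_nat w"] by (simp add: g_def R_def z_def y_def)
    interpret C: core \<mu> S x R by (rule core.intro[OF mu nx Rm conv])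
    have l1: "(\<lambda>k. frq z {[(a, True)]} 1 (R k)) \<longlonglongrightarrow> C.L [(a, True)]"
      using C.L_lim[of "[(a, True)]"] by (simp add: z_def y_def)
    have sub: "C.Wv \<subseteq> C.T 1" by auto
    have eqf: "frq z C.Wv 1 m' = frq y {[True]} 1 m'" for m'
      unfolding frq_def cnt_def z_def by (simp add: map_snd_word_zz)
    have l2: "(\<lambda>k. frq y {[True]} 1 (R k)) \<longlonglongrightarrow> infsum C.L C.Wv"
      using C.KL[OF sub] eqf by (simp add: z_def y_def)
    have ceq: "C.L [(a, True)] = m * infsum C.L C.Wv" using C.core_eq[OF H] by (simp add: m_def)
    have pos: "0 < infsum C.L C.Wv"
    proof -
      have dy: "ereal (real (card (S \<inter> {..<n})) / real n) = ereal (frq y {[True]} 1 n)" for n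
      proof -
        have "card (S \<inter> {..<n}) = cnt y {[True]} 1 n" unfolding cnt_y1 y_def
          by (rule arg_cong[where f=card]) auto
        then show ?thesis by (simp add: frq_def)
      qed
      have "lower_density S = liminf (\<lambda>n. ereal (frq y {[True]} 1 n))"
        unfolding lower_density_def dy ..
      also have "\<dots> \<le> liminf ((\<lambda>n. ereal (frq y {[True]} 1 n)) \<circ> R)" by (rule liminf_subseq_mono[OF Rm])
      also have "\<dots> = ereal (infsum C.L C.Wv)"
      proof (rule lim_imp_Liminf)
        show "\<not> trivial_limit (sequentially :: nat filter)" by simp
        show "((\<lambda>n. ereal (frq y {[True]} 1 n)) \<circ> R) \<longlonglongrightarrow> ereal (infsum C.L C.Wv)"
          using l2 by (simp add: o_def)
      qed
      finally have "lower_density S \<le> ereal (infsum C.L C.Wv)" .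
      with ld have "0 < ereal (infsum C.L C.Wv)" by (rule less_le_trans)
      then show ?thesis by simp
    qed
    have "(\<lambda>k. frq z {[(a, True)]} 1 (R k) / frq y {[True]} 1 (R k)) \<longlonglongrightarrow> C.L [(a, True)] / infsum C.L C.Wv"
      by (rule tendsto_divide[OF l1 l2]) (use pos in simp)
    then have lc: "(\<lambda>k. c (N' (r k))) \<longlonglongrightarrow> m"
      using ceq pos by (simp add: c_eq R_def M_def)
    have "eventually (\<lambda>k. dist (c (N' (r k))) m < e) sequentially" by (rule tendstoD[OF lc e(1)])
    then obtain k where "dist (c (N' (r k))) m < e" by (auto simp: eventually_sequentially)
    moreover have "N' (r k) \<in> Q" by (rule N'Q)
    ultimately show False by (simp add: Q_def)
  qed
qed


end
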